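(* Let $\pi$ be a smooth representation of $G$ and let $v\in\pi^{I_1}$ be non-zero such that $I$ acts on $v$ via a character $\chi$. Then there exists $j$ with $0\le j\le q-1$ such that, setting $$w=\sum_{\lambda\in\mathbf F_q}\lambda^j\begin{pmatrix}1&[\lambda]\\0&1\end{pmatrix}t\,v$$ (with the convention $0^0=1$), we have $w\in\pi^{I_1}$ and $\langle K\cdot w\rangle$ is an irreducible (in particular non-zero) representation of $K$.
   Context: $F$ non-Archimedean local field, ring of integers $\mathfrak o$, maximal ideal $\mathfrak p$, uniformizer $\varpi$, residue field $\mathbf F_q$ of characteristic $p$ with a fixed embedding $\mathbf F_q\hookrightarrow\overline{\mathbf F}_p$ (used to interpret $\lambda^j\in\overline{\mathbf F}_p$), $[\lambda]$ the Teichmüller lift. $G=\mathrm{GL}_2(F)$, $K=\mathrm{GL}_2(\mathfrak o)$, $I=\begin{pmatrix}\mathfrak o^\times&\mathfrak o\\ \mathfrak p&\mathfrak o^\times\end{pmatrix}$, $I_1=\begin{pmatrix}1+\mathfrak p&\mathfrak o\\ \mathfrak p&1+\mathfrak p\end{pmatrix}$, $t=\begin{pmatrix}\varpi&0\\0&1\end{pmatrix}$. Representations are smooth on $\overline{\mathbf F}_p$-vector spaces; $\langle K\cdot w\rangle$ is the $K$-subrepresentation generated by $w$. *)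

theory Defs
  imports "HOL-Analysis.Analysis" "HOL-Computational_Algebra.Polynomial"
begin

text \<open>val x is the (normalized, integer valued) valuation of x; its value at 0 is irrelevant.\<close>

definition pow_ideal :: "('f::field \<Rightarrow> int) \<Rightarrow> int \<Rightarrow> 'f set" where
  "pow_ideal val n = {x. x = 0 \<or> val x \<ge> n}"

definition intring :: "('f::field \<Rightarrow> int) \<Rightarrow> 'f set" where
  "intring val = pow_ideal val 0"

definition maxideal :: "('f::field \<Rightarrow> int) \<Rightarrow> 'f set" where
  "maxideal val = pow_ideal val 1"

definition res :: "('f::field \<Rightarrow> int) \<Rightarrow> 'f \<Rightarrow> 'f set" where
  "res val x = {y \<in> intring val. x - y \<in> maxideal val}"

definition residue_field :: "('f::field \<Rightarrow> int) \<Rightarrow> 'f set set" where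
  "residue_field val = res val ` intring val"

definition discrete_valuation :: "('f::field \<Rightarrow> int) \<Rightarrow> bool" where
  "discrete_valuation val \<longleftrightarrow>
     (\<forall>x y. x \<noteq> 0 \<longrightarrow> y \<noteq> 0 \<longrightarrow> val (x * y) = val x + val y) \<and>
     (\<forall>x y. x \<noteq> 0 \<longrightarrow> y \<noteq> 0 \<longrightarrow> x + y \<noteq> 0 \<longrightarrow> val (x + y) \<ge> min (val x) (val y)) \<and>
     (\<exists>x. x \<noteq> 0 \<and> val x = 1)"

definition val_complete :: "('f::field \<Rightarrow> int) \<Rightarrow> bool" where
  "val_complete val \<longleftrightarrow>
     (\<forall>a :: nat \<Rightarrow> 'f.
        (\<forall>N. \<exists>M. \<forall>m\<ge>M. \<forall>n\<ge>M. a m - a n \<in> pow_ideal val N) \<longrightarrow>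
        (\<exists>L. \<forall>N. \<exists>M. \<forall>n\<ge>M. a n - L \<in> pow_ideal val N))"

definition nonarch_local_field :: "('f::field \<Rightarrow> int) \<Rightarrow> bool" where
  "nonarch_local_field val \<longleftrightarrow>
     discrete_valuation val \<and> val_complete val \<and> finite (residue_field val)"

definition qq :: "('f::field \<Rightarrow> int) \<Rightarrow> nat" where
  "qq val = card (residue_field val)"

definition teich :: "('f::field \<Rightarrow> int) \<Rightarrow> 'f set \<Rightarrow> 'f" where
  "teich val l = (THE x. x \<in> intring val \<and> x ^ qq val = x \<and> res val x = l)"

definition alg_closed :: "'k::field itself \<Rightarrow> bool" where
  "alg_closed _ \<longleftrightarrow> (\<forall>P :: 'k poly. degree P \<ge> 1 \<longrightarrow> (\<exists>x. poly P x = 0))"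

definition algebraic_over_prime_field :: "'k::field itself \<Rightarrow> bool" where
  "algebraic_over_prime_field _ \<longleftrightarrow>
     (\<forall>x :: 'k. \<exists>P :: 'k poly. P \<noteq> 0 \<and> (\<forall>i. coeff P i \<in> range of_nat) \<and> poly P x = 0)"

definition residue_embedding :: "('f::field \<Rightarrow> int) \<Rightarrow> ('f set \<Rightarrow> 'k::field) \<Rightarrow> bool" where
  "residue_embedding val \<iota> \<longleftrightarrow>
     inj_on \<iota> (residue_field val) \<and> \<iota> (res val 1) = 1 \<and>
     (\<forall>x\<in>intring val. \<forall>y\<in>intring val. \<iota> (res val (x + y)) = \<iota> (res val x) + \<iota> (res val y) \<and>
                              \<iota> (res val (x * y)) = \<iota> (res val x) * \<iota> (res val y))"

definition mat2 :: "'f::field \<Rightarrow> 'f \<Rightarrow> 'f \<Rightarrow> 'f \<Rightarrow> 'f^2^2" where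
  "mat2 a b c d = (\<chi> i j. if i = 1 then (if j = 1 then a else b) else (if j = 1 then c else d))"

definition GL2 :: "('f::field^2^2) set" where
  "GL2 = {g. det g \<noteq> 0}"

definition KK :: "('f::field \<Rightarrow> int) \<Rightarrow> ('f^2^2) set" where
  "KK val = {g. (\<forall>i j. g$i$j \<in> intring val) \<and> det g \<noteq> 0 \<and> val (det g) = 0}"

text \<open>Principal congruence subgroups K(n) = 1 + p^n M_2(o), a basis of open neighbourhoods of 1.\<close>
definition Kcong :: "('f::field \<Rightarrow> int) \<Rightarrow> nat \<Rightarrow> ('f^2^2) set" where
  "Kcong val n = {g \<in> KK val. \<forall>i j. g$i$j - mat 1 $i$j \<in> pow_ideal val (int n)}"

definition Iwahori :: "('f::field \<Rightarrow> int) \<Rightarrow> ('f^2^2) set" where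
  "Iwahori val = {g \<in> KK val. g$2$1 \<in> maxideal val}"

definition Iwahori1 :: "('f::field \<Rightarrow> int) \<Rightarrow> ('f^2^2) set" where
  "Iwahori1 val = {g \<in> Iwahori val. g$1$1 - 1 \<in> maxideal val \<and> g$2$2 - 1 \<in> maxideal val}"

definition smooth_rep ::
  "('f::field \<Rightarrow> int) \<Rightarrow> ('k::field \<Rightarrow> 'v::ab_group_add \<Rightarrow> 'v) \<Rightarrow> ('f^2^2 \<Rightarrow> 'v \<Rightarrow> 'v) \<Rightarrow> bool" where
  "smooth_rep val sc \<rho> \<longleftrightarrow>
     vector_space sc \<and>
     (\<forall>g\<in>GL2. Vector_Spaces.linear sc sc (\<rho> g)) \<and>
     \<rho> (mat 1) = id \<and>
     (\<forall>g\<in>GL2. \<forall>h\<in>GL2. \<rho> (g ** h) = \<rho> g \<circ> \<rho> h) \<and>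
     (\<forall>v. \<exists>n. \<forall>g\<in>Kcong val n. \<rho> g v = v)"

definition invariants :: "('f^2^2 \<Rightarrow> 'v \<Rightarrow> 'v) \<Rightarrow> ('f^2^2) set \<Rightarrow> 'v set" where
  "invariants \<rho> H = {v. \<forall>g\<in>H. \<rho> g v = v}"

definition gen_subrep ::
  "('k::field \<Rightarrow> 'v::ab_group_add \<Rightarrow> 'v) \<Rightarrow> ('f^2^2 \<Rightarrow> 'v \<Rightarrow> 'v) \<Rightarrow> ('f^2^2) set \<Rightarrow> 'v \<Rightarrow> 'v set" where
  "gen_subrep sc \<rho> H w = module.span sc {\<rho> g w | g. g \<in> H}"

definition irreducible_subrep ::
  "('k::field \<Rightarrow> 'v::ab_group_add \<Rightarrow> 'v) \<Rightarrow> ('f^2^2 \<Rightarrow> 'v \<Rightarrow> 'v) \<Rightarrow> ('f^2^2) set \<Rightarrow> 'v set \<Rightarrow> bool" where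
  "irreducible_subrep sc \<rho> H W \<longleftrightarrow>
     W \<noteq> {0} \<and>
     (\<forall>U. module.subspace sc U \<and> U \<subseteq> W \<and> (\<forall>g\<in>H. \<forall>u\<in>U. \<rho> g u \<in> U) \<longrightarrow> U = {0} \<or> U = W)"

end

theory Submission
  imports Defs
begin

locale VL =
  fixes val :: "'f::field \<Rightarrow> int" and pi :: 'f
  assumes F: "nonarch_local_field val"
    and pi_nz: "pi \<noteq> 0" and pi_val: "val pi = 1"
begin

abbreviation "Ov \<equiv> intring val"
abbreviation "Pv \<equiv> maxideal val"
abbreviation "Iv \<equiv> pow_ideal val"

lemma dv: "discrete_valuation val" using F by (simp add: nonarch_local_field_def)

lemma v_mult: "x \<noteq> 0 \<Longrightarrow> y \<noteq> 0 \<Longrightarrow> val (x * y) = val x + val y"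
  using dv by (simp add: discrete_valuation_def)

lemma v_add: "x \<noteq> 0 \<Longrightarrow> y \<noteq> 0 \<Longrightarrow> x + y \<noteq> 0 \<Longrightarrow> min (val x) (val y) \<le> val (x + y)"
  using dv by (simp add: discrete_valuation_def)

lemma val_one[simp]: "val 1 = 0"
  using v_mult[of 1 1] by simp

lemma val_inv: "x \<noteq> 0 \<Longrightarrow> val (inverse x) = - val x"
  using v_mult[of x "inverse x"] by simp

lemma val_div: "x \<noteq> 0 \<Longrightarrow> y \<noteq> 0 \<Longrightarrow> val (x / y) = val x - val y"
  using v_mult[of x "inverse y"] val_inv[of y] by (simp add: divide_inverse)

lemma val_m1[simp]: "val (-1) = 0"
  using v_mult[of "-1" "-1"] by simp

lemma val_uminus[simp]: "val (- x) = val x"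
proof (cases "x = 0")
  case False thus ?thesis using v_mult[of "-1" x] by simp
qed simp

lemma I_iff: "x \<in> Iv n \<longleftrightarrow> x = 0 \<or> n \<le> val x"
  by (simp add: pow_ideal_def)

lemma O_iff: "x \<in> Ov \<longleftrightarrow> x = 0 \<or> 0 \<le> val x"
  by (simp add: intring_def pow_ideal_def)

lemma P_iff: "x \<in> Pv \<longleftrightarrow> x = 0 \<or> 1 \<le> val x"
  by (simp add: maxideal_def pow_ideal_def)

lemma O_I: "Ov = Iv 0" by (simp add: intring_def)
lemma P_I: "Pv = Iv 1" by (simp add: maxideal_def)

lemma I_zero[simp]: "0 \<in> Iv n" by (simp add: I_iff)

lemma I_add: "x \<in> Iv n \<Longrightarrow> y \<in> Iv n \<Longrightarrow> x + y \<in> Iv n"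
  using v_add[of x y] unfolding I_iff by (cases "x = 0"; cases "y = 0"; cases "x + y = 0"; auto)

lemma I_uminus: "x \<in> Iv n \<Longrightarrow> - x \<in> Iv n"
  by (auto simp: I_iff)

lemma I_diff: "x \<in> Iv n \<Longrightarrow> y \<in> Iv n \<Longrightarrow> x - y \<in> Iv n"
  using I_add[of x n "-y"] I_uminus[of y n] by simp

lemma I_mult: "x \<in> Iv a \<Longrightarrow> y \<in> Iv b \<Longrightarrow> x * y \<in> Iv (a + b)"
  using v_mult[of x y] unfolding I_iff by (cases "x = 0"; cases "y = 0"; auto)

lemma I_mono: "m \<le> n \<Longrightarrow> x \<in> Iv n \<Longrightarrow> x \<in> Iv m"
  by (auto simp: I_iff)

lemma I_sum: "(\<And>i. i \<in> A \<Longrightarrow> f i \<in> Iv n) \<Longrightarrow> sum f A \<in> Iv n"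
  by (induction A rule: infinite_finite_induct) (auto intro: I_add)

lemma O_zero[simp]: "0 \<in> Ov" by (simp add: O_iff)
lemma O_one[simp]: "1 \<in> Ov" by (simp add: O_iff)
lemma P_zero[simp]: "0 \<in> Pv" by (simp add: P_iff)
lemma one_notP[simp]: "1 \<notin> Pv" by (simp add: P_iff)

lemma O_add: "x \<in> Ov \<Longrightarrow> y \<in> Ov \<Longrightarrow> x + y \<in> Ov" using I_add O_I by auto
lemma O_diff: "x \<in> Ov \<Longrightarrow> y \<in> Ov \<Longrightarrow> x - y \<in> Ov" using I_diff O_I by auto
lemma O_uminus: "x \<in> Ov \<Longrightarrow> - x \<in> Ov" using I_uminus O_I by auto
lemma O_mult: "x \<in> Ov \<Longrightarrow> y \<in> Ov \<Longrightarrow> x * y \<in> Ov" using I_mult[of x 0 y 0] O_I by auto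
lemma O_pow: "x \<in> Ov \<Longrightarrow> x ^ n \<in> Ov" by (induction n) (auto intro: O_mult)
lemma O_sum: "(\<And>i. i \<in> A \<Longrightarrow> f i \<in> Ov) \<Longrightarrow> sum f A \<in> Ov" using I_sum O_I by auto
lemma O_of_nat: "of_nat n \<in> Ov" by (induction n) (auto intro: O_add)
lemma P_add: "x \<in> Pv \<Longrightarrow> y \<in> Pv \<Longrightarrow> x + y \<in> Pv" using I_add P_I by auto
lemma P_diff: "x \<in> Pv \<Longrightarrow> y \<in> Pv \<Longrightarrow> x - y \<in> Pv" using I_diff P_I by auto
lemma P_uminus: "x \<in> Pv \<Longrightarrow> - x \<in> Pv" using I_uminus P_I by auto
lemma P_multL: "x \<in> Ov \<Longrightarrow> y \<in> Pv \<Longrightarrow> x * y \<in> Pv" using I_mult[of x 0 y 1] O_I P_I by auto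
lemma P_multR: "x \<in> Pv \<Longrightarrow> y \<in> Ov \<Longrightarrow> x * y \<in> Pv" using I_mult[of x 1 y 0] O_I P_I by auto
lemma P_O: "x \<in> Pv \<Longrightarrow> x \<in> Ov" using I_mono[of 0 1 x] O_I P_I by auto
lemma P_sum: "(\<And>i. i \<in> A \<Longrightarrow> f i \<in> Pv) \<Longrightarrow> sum f A \<in> Pv" using I_sum P_I by auto

lemma pi_P: "pi \<in> Pv" by (simp add: P_iff pi_val)
lemma pi_O: "pi \<in> Ov" using pi_P P_O by blast

lemma unit_iff: "x \<in> Ov \<and> x \<notin> Pv \<longleftrightarrow> x \<noteq> 0 \<and> val x = 0"
  by (auto simp: O_iff P_iff)

lemma unit_inv: "x \<in> Ov \<Longrightarrow> x \<notin> Pv \<Longrightarrow> inverse x \<in> Ov \<and> inverse x \<notin> Pv"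
  using unit_iff[of x] unit_iff[of "inverse x"] val_inv[of x] by auto

lemma unit_nz: "x \<in> Ov \<Longrightarrow> x \<notin> Pv \<Longrightarrow> x \<noteq> 0"
  using unit_iff by blast

lemma unit_mult: "x \<in> Ov \<Longrightarrow> x \<notin> Pv \<Longrightarrow> y \<in> Ov \<Longrightarrow> y \<notin> Pv \<Longrightarrow> x * y \<in> Ov \<and> x * y \<notin> Pv"
  using unit_iff[of x] unit_iff[of y] unit_iff[of "x*y"] v_mult[of x y] by auto

lemma unit_div: "x \<in> Ov \<Longrightarrow> y \<in> Ov \<Longrightarrow> y \<notin> Pv \<Longrightarrow> x / y \<in> Ov"
  using unit_inv[of y] O_mult[of x "inverse y"] by (simp add: divide_inverse)

lemma unit_plusP: "x \<in> Ov \<Longrightarrow> x \<notin> Pv \<Longrightarrow> y \<in> Pv \<Longrightarrow> x + y \<in> Ov \<and> x + y \<notin> Pv"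
proof
  assume a: "x \<in> Ov" "x \<notin> Pv" "y \<in> Pv"
  thus "x + y \<in> Ov" using O_add P_O by blast
  show "x + y \<notin> Pv"
  proof
    assume "x + y \<in> Pv" then have "(x + y) - y \<in> Pv" using P_diff a by blast
    thus False using a by simp
  qed
qed

lemma unit_minusP: "x \<in> Ov \<Longrightarrow> x \<notin> Pv \<Longrightarrow> y \<in> Pv \<Longrightarrow> x - y \<in> Ov \<and> x - y \<notin> Pv"
  using unit_plusP[of x "-y"] P_uminus[of y] by simp

lemma div_pi: "x \<in> Pv \<Longrightarrow> x / pi \<in> Ov"
proof -
  assume "x \<in> Pv"
  thus ?thesis using val_div[of x pi] pi_nz pi_val unfolding P_iff O_iff by (cases "x = 0"; auto)
qed

lemma mult_pi: "x \<in> Ov \<Longrightarrow> x * pi \<in> Pv" using P_multR[of pi x] pi_P by (simp add: mult.commute)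

lemma I_pi: "x \<in> Iv n \<Longrightarrow> x * pi \<in> Iv (n + 1)"
  using I_mult[of x n pi 1] pi_val by (auto simp: I_iff)

lemma P_unit_diff: "x \<in> Ov \<Longrightarrow> x - 1 \<in> Pv \<Longrightarrow> x \<notin> Pv"
  using P_diff[of x "x - 1"] by auto

lemma O_unit_of: "x \<in> Ov \<Longrightarrow> x - 1 \<in> Pv \<Longrightarrow> x \<in> Ov \<and> x \<notin> Pv"
  using P_unit_diff by blast

end

locale RL = VL val pi for val :: "'f::field \<Rightarrow> int" and pi :: 'f +
  fixes \<iota> :: "'f set \<Rightarrow> 'k::field"
  assumes emb: "residue_embedding val \<iota>"
begin

abbreviation "RF \<equiv> residue_field val"
abbreviation "q \<equiv> qq val"
definition iota :: "'f \<Rightarrow> 'k" where "iota x = \<iota> (res val x)"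
definition Fq :: "'k set" where "Fq = \<iota> ` RF"

lemma res_eq: "x \<in> Ov \<Longrightarrow> y \<in> Ov \<Longrightarrow> res val x = res val y \<longleftrightarrow> x - y \<in> Pv"
proof
  assume xy: "x \<in> Ov" "y \<in> Ov"
  { assume e: "res val x = res val y"
    have "y \<in> res val y" using xy by (simp add: res_def)
    hence "y \<in> res val x" using e by simp
    thus "x - y \<in> Pv" by (simp add: res_def) }
  { assume d: "x - y \<in> Pv"
    show "res val x = res val y"
    proof (auto simp: res_def)
      fix z assume "z \<in> Ov" "x - z \<in> Pv"
      thus "y - z \<in> Pv" using P_diff[of "x - z" "x - y"] d by simp
    next
      fix z assume "z \<in> Ov" "y - z \<in> Pv"
      thus "x - z \<in> Pv" using P_add[of "x - y" "y - z"] d by simp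
    qed }
qed

lemma emb_inj: "inj_on \<iota> RF" using emb by (simp add: residue_embedding_def)

lemma res_in_RF: "x \<in> Ov \<Longrightarrow> res val x \<in> RF" by (simp add: residue_field_def)

lemma iota_add: "x \<in> Ov \<Longrightarrow> y \<in> Ov \<Longrightarrow> iota (x + y) = iota x + iota y"
  using emb by (simp add: residue_embedding_def iota_def)

lemma iota_mult: "x \<in> Ov \<Longrightarrow> y \<in> Ov \<Longrightarrow> iota (x * y) = iota x * iota y"
  using emb by (simp add: residue_embedding_def iota_def)

lemma iota_one[simp]: "iota 1 = 1"
  using emb by (simp add: residue_embedding_def iota_def)

lemma iota_zero[simp]: "iota 0 = 0"
  using iota_add[of 0 0] by (metis add.right_neutral add_left_cancel O_zero)

lemma iota_uminus: "x \<in> Ov \<Longrightarrow> iota (- x) = - iota x"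
proof -
  assume x: "x \<in> Ov"
  have "iota x + iota (- x) = 0" using iota_add[of x "-x"] O_uminus[of x] x by simp
  thus ?thesis by (metis neg_eq_iff_add_eq_0)
qed

lemma iota_diff: "x \<in> Ov \<Longrightarrow> y \<in> Ov \<Longrightarrow> iota (x - y) = iota x - iota y"
  using iota_add[of x "-y"] iota_uminus[of y] O_uminus[of y] by simp

lemma iota_pow: "x \<in> Ov \<Longrightarrow> iota (x ^ n) = iota x ^ n"
  by (induction n) (auto simp: iota_mult O_pow)

lemma iota_of_nat: "iota (of_nat n) = of_nat n"
  by (induction n) (auto simp: iota_add O_of_nat)

lemma iota_sum: "(\<And>i. i \<in> A \<Longrightarrow> f i \<in> Ov) \<Longrightarrow> iota (sum f A) = (\<Sum>i\<in>A. iota (f i))"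
  by (induction A rule: infinite_finite_induct) (auto simp: iota_add O_sum)

lemma iota_eq: "x \<in> Ov \<Longrightarrow> y \<in> Ov \<Longrightarrow> iota x = iota y \<longleftrightarrow> x - y \<in> Pv"
  using emb_inj res_eq[of x y] res_in_RF[of x] res_in_RF[of y] unfolding iota_def inj_on_def by metis

lemma iota_zero_iff: "x \<in> Ov \<Longrightarrow> iota x = 0 \<longleftrightarrow> x \<in> Pv"
  using iota_eq[of x 0] by simp

lemma iota_inv: "x \<in> Ov \<Longrightarrow> x \<notin> Pv \<Longrightarrow> iota (inverse x) = inverse (iota x)"
proof -
  assume a: "x \<in> Ov" "x \<notin> Pv"
  hence "iota x * iota (inverse x) = 1" using iota_mult[of x "inverse x"] unit_inv[OF a] unit_nz[OF a] by simp
  thus ?thesis by (metis inverse_unique)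
qed

lemma iota_div: "x \<in> Ov \<Longrightarrow> y \<in> Ov \<Longrightarrow> y \<notin> Pv \<Longrightarrow> iota (x / y) = iota x / iota y"
  using iota_mult[of x "inverse y"] iota_inv[of y] unit_inv[of y] by (simp add: divide_inverse)

lemma Fq_eq: "Fq = iota ` Ov"
  by (auto simp: Fq_def iota_def residue_field_def)

lemma iota_Fq: "x \<in> Ov \<Longrightarrow> iota x \<in> Fq" by (simp add: Fq_eq)

lemma finite_RF: "finite RF" using F by (simp add: nonarch_local_field_def)
lemma finite_Fq: "finite Fq" using finite_RF by (simp add: Fq_def)
lemma card_Fq: "card Fq = q" using emb_inj by (simp add: Fq_def qq_def card_image)

lemma Fq_zero[simp]: "0 \<in> Fq" using iota_Fq[of 0] by simp
lemma Fq_one[simp]: "1 \<in> Fq" using iota_Fq[of 1] by simp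

lemma Fq_cases: "\<zeta> \<in> Fq \<Longrightarrow> (\<And>x. x \<in> Ov \<Longrightarrow> \<zeta> = iota x \<Longrightarrow> thesis) \<Longrightarrow> thesis"
  by (auto simp: Fq_eq)

lemma Fq_add: "a \<in> Fq \<Longrightarrow> b \<in> Fq \<Longrightarrow> a + b \<in> Fq"
  by (auto simp: Fq_eq iota_add[symmetric] intro!: imageI O_add)
lemma Fq_mult: "a \<in> Fq \<Longrightarrow> b \<in> Fq \<Longrightarrow> a * b \<in> Fq"
  by (auto simp: Fq_eq iota_mult[symmetric] intro!: imageI O_mult)
lemma Fq_uminus: "a \<in> Fq \<Longrightarrow> - a \<in> Fq"
  by (auto simp: Fq_eq iota_uminus[symmetric] intro!: imageI O_uminus)
lemma Fq_diff: "a \<in> Fq \<Longrightarrow> b \<in> Fq \<Longrightarrow> a - b \<in> Fq"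
  using Fq_add[of a "-b"] Fq_uminus[of b] by simp
lemma Fq_pow: "a \<in> Fq \<Longrightarrow> a ^ n \<in> Fq"
  by (induction n) (auto intro: Fq_mult)
lemma Fq_inverse: "a \<in> Fq \<Longrightarrow> inverse a \<in> Fq"
proof -
  assume "a \<in> Fq"
  then obtain x where x: "x \<in> Ov" "a = iota x" by (auto simp: Fq_eq)
  show ?thesis
  proof (cases "x \<in> Pv")
    case True hence "a = 0" using x iota_zero_iff by simp
    thus ?thesis by simp
  next
    case False thus ?thesis using x iota_inv[of x] unit_inv[of x] iota_Fq by metis
  qed
qed
lemma Fq_divide: "a \<in> Fq \<Longrightarrow> b \<in> Fq \<Longrightarrow> a / b \<in> Fq"
  using Fq_mult[of a "inverse b"] Fq_inverse[of b] by (simp add: divide_inverse)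

definition L :: "'k \<Rightarrow> 'f" where "L z = (SOME x. x \<in> Ov \<and> iota x = z)"

lemma L: "z \<in> Fq \<Longrightarrow> L z \<in> Ov \<and> iota (L z) = z"
  unfolding L_def by (rule someI_ex) (auto simp: Fq_eq)

lemma L_O: "z \<in> Fq \<Longrightarrow> L z \<in> Ov" using L by blast
lemma iota_L[simp]: "z \<in> Fq \<Longrightarrow> iota (L z) = z" using L by blast
lemma L_unit: "z \<in> Fq \<Longrightarrow> z \<noteq> 0 \<Longrightarrow> L z \<notin> Pv"
  using L[of z] iota_zero_iff[of "L z"] by auto

lemma char_q: "(of_nat q :: 'k) = 0"
proof -
  have bij: "bij_betw (\<lambda>z. z + 1) Fq Fq"
  proof (rule bij_betw_imageI)
    show "inj_on (\<lambda>z. z + 1) Fq" by (auto simp: inj_on_def)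
    show "(\<lambda>z. z + 1) ` Fq = Fq"
    proof
      show "(\<lambda>z. z + 1) ` Fq \<subseteq> Fq" using Fq_add by auto
      show "Fq \<subseteq> (\<lambda>z. z + 1) ` Fq"
      proof
        fix z assume "z \<in> Fq"
        hence "z - 1 \<in> Fq" using Fq_diff by auto
        thus "z \<in> (\<lambda>z. z + 1) ` Fq" by (auto intro!: image_eqI[of _ _ "z - 1"])
      qed
    qed
  qed
  have "(\<Sum>z\<in>Fq. z) = (\<Sum>z\<in>Fq. z + 1)"
    using sum.reindex_bij_betw[OF bij, of "\<lambda>z. z"] by simp
  also have "\<dots> = (\<Sum>z\<in>Fq. z) + of_nat (card Fq)" by (simp add: sum.distrib)
  finally show ?thesis using card_Fq by simp
qed

lemma q_ge2: "2 \<le> q"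
proof -
  have "{0, 1} \<subseteq> Fq" by simp
  hence "card {0::'k, 1} \<le> card Fq" using finite_Fq card_mono by blast
  thus ?thesis using card_Fq by simp
qed

lemma card_Fq_nz: "card (Fq - {0}) = q - 1"
  using card_Fq finite_Fq by (simp add: card_Diff_singleton)

lemma mult_bij: "a \<in> Fq \<Longrightarrow> a \<noteq> 0 \<Longrightarrow> bij_betw (\<lambda>z. a * z) (Fq - {0}) (Fq - {0})"
proof (rule bij_betw_imageI)
  assume a: "a \<in> Fq" "a \<noteq> 0"
  show "inj_on (\<lambda>z. a * z) (Fq - {0})" using a by (auto simp: inj_on_def)
  show "(\<lambda>z. a * z) ` (Fq - {0}) = Fq - {0}"
  proof
    show "(\<lambda>z. a * z) ` (Fq - {0}) \<subseteq> Fq - {0}" using a Fq_mult by auto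
    show "Fq - {0} \<subseteq> (\<lambda>z. a * z) ` (Fq - {0})"
    proof
      fix z assume z: "z \<in> Fq - {0}"
      hence "z / a \<in> Fq - {0}" using Fq_divide a by auto
      moreover have "z = a * (z / a)" using a by simp
      ultimately show "z \<in> (\<lambda>z. a * z) ` (Fq - {0})" by blast
    qed
  qed
qed

lemma fermat: "a \<in> Fq \<Longrightarrow> a \<noteq> 0 \<Longrightarrow> a ^ (q - 1) = 1"
proof -
  assume a: "a \<in> Fq" "a \<noteq> 0"
  have "(\<Prod>z\<in>Fq - {0}. z) = (\<Prod>z\<in>Fq - {0}. a * z)"
    using prod.reindex_bij_betw[OF mult_bij[OF a], of "\<lambda>z. z"] by simp
  also have "\<dots> = a ^ (q - 1) * (\<Prod>z\<in>Fq - {0}. z)"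
    using card_Fq_nz by (simp add: prod.distrib)
  finally have "a ^ (q - 1) * (\<Prod>z\<in>Fq - {0}. z) = 1 * (\<Prod>z\<in>Fq - {0}. z)" by simp
  moreover have "(\<Prod>z\<in>Fq - {0}. z) \<noteq> 0" using finite_Fq by simp
  ultimately show ?thesis by (metis mult_cancel_right)
qed

lemma frob: "a \<in> Fq \<Longrightarrow> a ^ q = a"
proof (cases "a = 0")
  case True thus ?thesis using q_ge2 by simp
next
  case False
  assume a: "a \<in> Fq"
  have "q = Suc (q - 1)" using q_ge2 by simp
  hence "a ^ q = a ^ (q - 1) * a" by (metis power_Suc2)
  thus ?thesis using fermat[OF a False] by simp
qed

lemma pow_mod: "a \<in> Fq \<Longrightarrow> a \<noteq> 0 \<Longrightarrow> a ^ n = a ^ (n mod (q - 1))"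
proof -
  assume a: "a \<in> Fq" "a \<noteq> 0"
  have "a ^ n = a ^ ((q - 1) * (n div (q - 1)) + n mod (q - 1))" by simp
  also have "\<dots> = (a ^ (q - 1)) ^ (n div (q - 1)) * a ^ (n mod (q - 1))"
    by (simp only: power_add power_mult)
  finally show ?thesis using fermat[OF a] by simp
qed

lemma exists_nonroot:
  assumes "\<not> (q - 1) dvd n"
  shows "\<exists>a\<in>Fq - {0}. a ^ n \<noteq> 1"
proof (rule ccontr)
  assume "\<not> ?thesis"
  hence all: "\<And>a. a \<in> Fq - {0} \<Longrightarrow> a ^ n = 1" by blast
  define r where "r = n mod (q - 1)"
  have r0: "0 < r" using assms dvd_eq_mod_eq_0 unfolding r_def by (metis gr0I)
  have rl: "r < q - 1" using q_ge2 r_def by simp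
  define p :: "'k poly" where "p = [:-1:] + monom 1 r"
  have dp: "degree p = r" using r0 unfolding p_def by (subst degree_add_eq_right) (auto simp: degree_monom_eq)
  have pnz: "p \<noteq> 0" using dp r0 by auto
  have "Fq - {0} \<subseteq> {x. poly p x = 0}"
  proof
    fix a assume a: "a \<in> Fq - {0}"
    hence "a ^ r = 1" using all[OF a] pow_mod[of a n] by (simp add: r_def)
    thus "a \<in> {x. poly p x = 0}" by (simp add: p_def poly_monom)
  qed
  hence "card (Fq - {0}) \<le> card {x. poly p x = 0}"
    using poly_roots_finite[OF pnz] card_mono by blast
  also have "\<dots> \<le> r" using card_poly_roots_bound[OF pnz] dp by simp
  finally show False using card_Fq_nz rl by simp
qed

lemma psum_nz: "(\<Sum>z\<in>Fq - {0}. z ^ n) = (if (q - 1) dvd n then -1 else 0)"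
proof (cases "(q - 1) dvd n")
  case True
  have "(\<Sum>z\<in>Fq - {0}. z ^ n) = (\<Sum>z\<in>Fq - {0}. 1)"
  proof (rule sum.cong)
    fix z assume z: "z \<in> Fq - {0}"
    obtain m where "n = (q - 1) * m" using True by blast
    thus "z ^ n = 1" using fermat[of z] z by (simp add: power_mult)
  qed simp
  also have "\<dots> = of_nat (q - 1)" using card_Fq_nz by simp
  also have "\<dots> = -1" using char_q q_ge2 by (simp add: of_nat_diff)
  finally show ?thesis using True by simp
next
  case False
  then obtain a where a: "a \<in> Fq - {0}" "a ^ n \<noteq> 1" using exists_nonroot by blast
  have "(\<Sum>z\<in>Fq - {0}. z ^ n) = (\<Sum>z\<in>Fq - {0}. (a * z) ^ n)"
    using sum.reindex_bij_betw[OF mult_bij[of a], of "\<lambda>z. z ^ n"] a by simp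
  also have "\<dots> = a ^ n * (\<Sum>z\<in>Fq - {0}. z ^ n)" by (simp add: power_mult_distrib sum_distrib_left)
  finally have "(1 - a ^ n) * (\<Sum>z\<in>Fq - {0}. z ^ n) = 0" by (simp add: algebra_simps)
  thus ?thesis using a False by simp
qed

lemma psum: "(\<Sum>z\<in>Fq. z ^ n) = (if 0 < n \<and> (q - 1) dvd n then -1 else 0)"
proof -
  have "(\<Sum>z\<in>Fq. z ^ n) = 0 ^ n + (\<Sum>z\<in>Fq - {0}. z ^ n)"
    using finite_Fq by (simp add: sum.remove[of Fq 0])
  moreover have "n = 0 \<Longrightarrow> (\<Sum>z\<in>Fq. z ^ n) = 0" using char_q card_Fq by simp
  ultimately show ?thesis using psum_nz by (cases "n = 0") auto
qed

end

context RL
begin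

lemma q_P: "(of_nat q :: 'f) \<in> Pv"
  using iota_zero_iff[of "of_nat q"] iota_of_nat[of q] char_q O_of_nat by simp

lemma I_O: "0 \<le> n \<Longrightarrow> c \<in> Iv n \<Longrightarrow> c \<in> Ov"
  using I_mono[of 0 n c] O_I by simp

lemma I_multO: "c \<in> Iv n \<Longrightarrow> y \<in> Ov \<Longrightarrow> c * y \<in> Iv n"
  using I_mult[of c n y 0] O_I by simp

lemma I_pow: "0 \<le> n \<Longrightarrow> c \<in> Iv n \<Longrightarrow> c ^ Suc i \<in> Iv n"
proof (induction i)
  case (Suc i)
  hence "c ^ Suc i * c \<in> Iv n" using I_multO[of "c ^ Suc i" n c] I_O by blast
  thus ?case by (simp add: mult.commute)
qed simp

lemma powq_step:
  assumes x: "x \<in> Ov" and y: "y \<in> Ov" and n: "1 \<le> n" and d: "x - y \<in> Iv n"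
  shows "x ^ q - y ^ q \<in> Iv (n + 1)"
proof -
  define c where "c = x - y"
  have cO: "c \<in> Ov" using I_O[of n c] n d unfolding c_def by simp
  have "x ^ q = (c + y) ^ q" by (simp add: c_def)
  also have "\<dots> = (\<Sum>k\<le>q. of_nat (q choose k) * c ^ k * y ^ (q - k))" by (rule binomial_ring)
  also have "\<dots> = y ^ q + (\<Sum>k\<in>{1..q}. of_nat (q choose k) * c ^ k * y ^ (q - k))"
  proof -
    have "{..q} = insert 0 {1..q}" by auto
    thus ?thesis by simp
  qed
  finally have eq: "x ^ q - y ^ q = (\<Sum>k\<in>{1..q}. of_nat (q choose k) * c ^ k * y ^ (q - k))" by simp
  have "(\<Sum>k\<in>{1..q}. of_nat (q choose k) * c ^ k * y ^ (q - k)) \<in> Iv (n + 1)"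
  proof (rule I_sum)
    fix k assume k: "k \<in> {1..q}"
    show "of_nat (q choose k) * c ^ k * y ^ (q - k) \<in> Iv (n + 1)"
    proof (cases "k = 1")
      case True
      have "of_nat q * c \<in> Iv (1 + n)" using I_mult[of "of_nat q" 1 c n] q_P P_I d c_def by simp
      hence "of_nat q * c * y ^ (q - 1) \<in> Iv (1 + n)" using I_multO O_pow y by blast
      thus ?thesis using True by (simp add: add.commute)
    next
      case False
      hence k2: "k = Suc (Suc (k - 2))" using k by auto
      have "c * c \<in> Iv (n + n)" using I_mult d c_def by blast
      hence cc: "c * c \<in> Iv (n + 1)" using I_mono[of "n + 1" "n + n"] n by simp
      have "c ^ k = (c * c) * c ^ (k - 2)" by (subst k2) (simp only: power_Suc mult.assoc)
      hence "c ^ k \<in> Iv (n + 1)" using I_multO[OF cc O_pow[OF cO]] by simp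
      hence "c ^ k * (of_nat (q choose k) * y ^ (q - k)) \<in> Iv (n + 1)"
        using I_multO O_mult O_of_nat O_pow y by blast
      thus ?thesis by (simp add: algebra_simps)
    qed
  qed
  thus ?thesis using eq by simp
qed

lemma teich_unique:
  assumes x: "x \<in> Ov" and y: "y \<in> Ov" and xq: "x ^ q = x" and yq: "y ^ q = y" and d: "x - y \<in> Pv"
  shows "x = y"
proof -
  define S where "S = (\<Sum>i<q. y ^ (q - Suc i) * x ^ i)"
  have SO: "S \<in> Ov" unfolding S_def using x y by (auto intro!: O_sum O_mult O_pow)
  have ixy: "iota x = iota y" using iota_eq x y d by simp
  have "iota S = (\<Sum>i<q. iota y ^ (q - Suc i) * iota x ^ i)"
    unfolding S_def using x y by (simp add: iota_sum iota_mult iota_pow O_mult O_pow)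
  also have "\<dots> = (\<Sum>i<q. iota y ^ (q - 1))"
  proof (rule sum.cong)
    fix i assume "i \<in> {..<q}"
    hence "q - Suc i + i = q - 1" by auto
    thus "iota y ^ (q - Suc i) * iota x ^ i = iota y ^ (q - 1)" using ixy by (simp flip: power_add)
  qed simp
  also have "\<dots> = of_nat q * iota y ^ (q - 1)" by simp
  finally have "iota S = 0" using char_q by simp
  hence SP: "S \<in> Pv" using iota_zero_iff SO by simp
  have "x - y = (x - y) * S" using power_diff_sumr2[of x q y] xq yq by (simp add: S_def)
  hence "(x - y) * (1 - S) = 0" by (simp add: algebra_simps)
  moreover have "1 - S \<noteq> 0" using SP by auto
  ultimately show ?thesis by simp
qed

lemma val_complete: "val_complete val" using F by (simp add: nonarch_local_field_def)

lemma teich_exists: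
  assumes y: "y \<in> Ov"
  shows "\<exists>x. x \<in> Ov \<and> x ^ q = x \<and> x - y \<in> Pv"
proof -
  define a where "a k = y ^ (q ^ k)" for k
  have aO: "a k \<in> Ov" for k using y by (simp add: a_def O_pow)
  have aS: "a (Suc k) = a k ^ q" for k by (simp add: a_def power_mult[symmetric] mult.commute)
  have step: "a (Suc k) - a k \<in> Iv (int k + 1)" for k
  proof (induction k)
    case 0
    have "iota (y ^ q - y) = 0" using y iota_diff iota_pow frob iota_Fq O_pow by simp
    hence "y ^ q - y \<in> Pv" using iota_zero_iff y O_diff O_pow by blast
    thus ?case using P_I by (simp add: a_def)
  next
    case (Suc k)
    have "a (Suc k) ^ q - a k ^ q \<in> Iv (int k + 1 + 1)"
      using powq_step[OF aO aO _ Suc.IH] by simp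
    thus ?case using aS by simp
  qed
  have cauchy: "a m - a n \<in> Iv (int n + 1)" if "n \<le> m" for m n
    using that
  proof (induction m)
    case 0 thus ?case by simp
  next
    case (Suc m)
    show ?case
    proof (cases "n = Suc m")
      case True thus ?thesis by simp
    next
      case False
      hence "n \<le> m" using Suc by simp
      hence h1: "a m - a n \<in> Iv (int n + 1)" using Suc by simp
      have "a (Suc m) - a m \<in> Iv (int n + 1)" using step[of m] I_mono[of "int n + 1" "int m + 1"] \<open>n \<le> m\<close> by simp
      from I_add[OF this h1] show ?thesis by simp
    qed
  qed
  have "\<forall>N. \<exists>M. \<forall>m\<ge>M. \<forall>n\<ge>M. a m - a n \<in> Iv N"
  proof
    fix N :: int
    show "\<exists>M. \<forall>m\<ge>M. \<forall>n\<ge>M. a m - a n \<in> Iv N"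
    proof (intro exI allI impI)
      fix m n assume mn: "nat N \<le> m" "nat N \<le> n"
      have "a m - a (nat N) \<in> Iv (int (nat N) + 1)" by (rule cauchy) (use mn in simp)
      moreover have "a n - a (nat N) \<in> Iv (int (nat N) + 1)" by (rule cauchy) (use mn in simp)
      ultimately have "a m - a n \<in> Iv (int (nat N) + 1)" using I_diff by fastforce
      thus "a m - a n \<in> Iv N" using I_mono[of N "int (nat N) + 1"] by simp
    qed
  qed
  then obtain Lm where Lm: "\<And>N. \<exists>M. \<forall>n\<ge>M. a n - Lm \<in> Iv N"
    using val_complete unfolding val_complete_def by blast
  obtain M0 where M0: "\<And>n. n \<ge> M0 \<Longrightarrow> a n - Lm \<in> Iv 1" using Lm by blast
  have LO: "Lm \<in> Ov"
  proof -
    have "a M0 - Lm \<in> Ov" using M0[of M0] I_O[of 1] by simp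
    hence "a M0 - (a M0 - Lm) \<in> Ov" using O_diff aO by blast
    thus ?thesis by simp
  qed
  have Ly: "Lm - y \<in> Pv"
  proof -
    have "a M0 - a 0 \<in> Pv" using cauchy[of 0 M0] P_I by simp
    moreover have "a M0 - Lm \<in> Pv" using M0 P_I by simp
    ultimately have "(a M0 - a 0) - (a M0 - Lm) \<in> Pv" using P_diff by blast
    thus ?thesis by (simp add: a_def)
  qed
  have Lq: "Lm ^ q - Lm \<in> Iv N" if N: "1 \<le> N" for N
  proof -
    obtain M where M: "\<And>n. n \<ge> M \<Longrightarrow> a n - Lm \<in> Iv N" using Lm by blast
    have "a M ^ q - Lm ^ q \<in> Iv (N + 1)" using powq_step[OF aO LO N M[of M]] by simp
    hence h1: "a M ^ q - Lm ^ q \<in> Iv N" using I_mono[of N "N+1"] by simp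
    have h2: "a (Suc M) - Lm \<in> Iv N" using M by simp
    have "(a (Suc M) - Lm) - (a M ^ q - Lm ^ q) \<in> Iv N" using I_diff[OF h2 h1] .
    thus ?thesis using aS by simp
  qed
  have "Lm ^ q - Lm = 0"
  proof (rule ccontr)
    assume nz: "Lm ^ q - Lm \<noteq> 0"
    have "Lm ^ q - Lm \<in> Iv (max 1 (val (Lm ^ q - Lm) + 1))" using Lq by simp
    thus False using nz by (simp add: I_iff)
  qed
  hence "Lm ^ q = Lm" by simp
  thus ?thesis using LO Ly by blast
qed

lemma teich_props:
  assumes l: "l \<in> RF"
  shows "teich val l \<in> Ov \<and> iota (teich val l) = \<iota> l"
proof -
  obtain y where y: "y \<in> Ov" "l = res val y" using l by (auto simp: residue_field_def)
  obtain x where x: "x \<in> Ov" "x ^ q = x" "x - y \<in> Pv" using teich_exists[OF y(1)] by blast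
  have ex: "x \<in> Ov \<and> x ^ q = x \<and> res val x = l" using x y res_eq by simp
  have un: "z = x" if "z \<in> Ov \<and> z ^ q = z \<and> res val z = l" for z
  proof -
    have "res val z = res val x" using that ex by simp
    hence "z - x \<in> Pv" using res_eq that ex by blast
    thus ?thesis using teich_unique[of z x] that x by simp
  qed
  have "teich val l = x" unfolding teich_def
    by (rule the_equality) (rule ex, rule un)
  hence "res val (teich val l) = l" using ex by simp
  thus ?thesis using \<open>teich val l = x\<close> x(1) unfolding iota_def by simp
qed

end

lemma two_ne_one_2[simp]: "(2::2) \<noteq> 1" "(1::2) \<noteq> 2"
  by (simp_all add: exhaust_2)

lemma mat2_nth[simp]:
  "(mat2 a b c d)$1$1 = a" "(mat2 a b c d)$1$2 = b" "(mat2 a b c d)$2$1 = c" "(mat2 a b c d)$2$2 = d"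
  by (simp_all add: mat2_def)

lemma mat2_eta: "(g::'f::field^2^2) = mat2 (g$1$1) (g$1$2) (g$2$1) (g$2$2)"
  by (simp add: mat2_def vec_eq_iff forall_2)

lemma mat2_eq_iff: "mat2 a b c d = mat2 a' b' c' d' \<longleftrightarrow> a = a' \<and> b = b' \<and> c = c' \<and> d = d'"
  by (auto simp: vec_eq_iff forall_2 mat2_def)

lemma mat2_mult: "mat2 a b c d ** mat2 a' b' c' d' =
   mat2 (a*a'+b*c') (a*b'+b*d') (c*a'+d*c') (c*b'+d*d')"
  by (simp add: vec_eq_iff forall_2 matrix_matrix_mult_def sum_2 mat2_def)

lemma mat2_det: "det (mat2 a b c d) = a * d - b * c"
  by (simp add: det_2)

lemma mat1_mat2: "(mat 1 :: 'f::field^2^2) = mat2 1 0 0 1"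
  by (simp add: vec_eq_iff forall_2 mat2_def mat_def)

definition tm :: "'f::field \<Rightarrow> 'f^2^2" where "tm p = mat2 p 0 0 1"
definition um :: "'f::field \<Rightarrow> 'f^2^2" where "um x = mat2 1 x 0 1"
definition sm :: "'f::field^2^2" where "sm = mat2 0 1 1 0"

lemma mat_M1:
  assumes "c * x + d \<noteq> 0" "y = (a * x + b) / (c * x + d)"
  shows "mat2 a b c d ** um x ** tm p = um y ** tm p ** mat2 (a - y * c) 0 (c * p) (c * x + d)"
proof -
  have "y * (c * x + d) = a * x + b" using assms by simp
  thus ?thesis by (simp add: um_def tm_def mat2_mult mat2_eq_iff algebra_simps)
qed

lemma mat_M2: "p \<noteq> 0 \<Longrightarrow> mat2 a b c d ** sm ** tm p = sm ** tm p ** mat2 d (c / p) (b * p) a"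
  by (simp add: sm_def tm_def mat2_mult mat2_eq_iff algebra_simps)

lemma mat_M3: "x \<noteq> 0 \<Longrightarrow> sm ** um x ** tm p = um (1 / x) ** tm p ** mat2 (- 1 / x) 0 p x"
  by (simp add: sm_def um_def tm_def mat2_mult mat2_eq_iff algebra_simps)

lemma mat_M10: "p \<noteq> 0 \<Longrightarrow> um x ** tm p = um z ** tm p ** um ((x - z) / p)"
  by (simp add: um_def tm_def mat2_mult mat2_eq_iff field_simps)

lemma mat_M5: "c \<noteq> 0 \<Longrightarrow> mat2 a b c d = um (a / c) ** sm ** mat2 c d 0 (b - a * d / c)"
  by (simp add: sm_def um_def mat2_mult mat2_eq_iff algebra_simps)

lemma mat_M6: "um x ** um y = um (x + y)"
  by (simp add: um_def mat2_mult mat2_eq_iff algebra_simps)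

lemma mat_M7: "sm ** sm = mat 1"
  by (simp add: sm_def mat2_mult mat1_mat2)

lemma mat_M9: "a \<noteq> 0 \<Longrightarrow> mat2 a b c d = mat2 1 0 (c / a) 1 ** mat2 a 0 0 1 ** mat2 1 0 0 ((a * d - b * c) / a) ** um (b / a)"
  by (simp add: um_def mat2_mult mat2_eq_iff field_simps)

lemma mat_inv: "a * d - b * c \<noteq> 0 \<Longrightarrow>
   mat2 a b c d ** mat2 (d / (a * d - b * c)) (- b / (a * d - b * c)) (- c / (a * d - b * c)) (a / (a * d - b * c)) = mat 1 \<and>
   mat2 (d / (a * d - b * c)) (- b / (a * d - b * c)) (- c / (a * d - b * c)) (a / (a * d - b * c)) ** mat2 a b c d = mat 1"
proof -
  assume D: "a * d - b * c \<noteq> 0"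
  have e1: "a * (d / (a * d - b * c)) + b * (- c / (a * d - b * c)) = 1"
    using D by (simp add: divide_simps; simp add: algebra_simps)
  have e2: "c * (- b / (a * d - b * c)) + d * (a / (a * d - b * c)) = 1"
    using D by (simp add: divide_simps; simp add: algebra_simps)
  have e3: "d / (a * d - b * c) * a + - b / (a * d - b * c) * c = 1"
    using D by (simp add: divide_simps; simp add: algebra_simps)
  have e4: "- c / (a * d - b * c) * b + a / (a * d - b * c) * d = 1"
    using D by (simp add: divide_simps; simp add: algebra_simps)
  show ?thesis unfolding mat2_mult mat1_mat2 mat2_eq_iff using e1 e2 e3 e4
    by (simp add: divide_simps algebra_simps)
qed

context VL
begin

lemma KK_iff: "mat2 a b c d \<in> KK val \<longleftrightarrow> a \<in> Ov \<and> b \<in> Ov \<and> c \<in> Ov \<and> d \<in> Ov \<and> a * d - b * c \<notin> Pv"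
proof -
  have "mat2 a b c d \<in> KK val \<longleftrightarrow> (a \<in> Ov \<and> b \<in> Ov \<and> c \<in> Ov \<and> d \<in> Ov) \<and> (a * d - b * c \<noteq> 0 \<and> val (a * d - b * c) = 0)"
    by (simp add: KK_def forall_2 mat2_det)
  also have "\<dots> \<longleftrightarrow> a \<in> Ov \<and> b \<in> Ov \<and> c \<in> Ov \<and> d \<in> Ov \<and> a * d - b * c \<notin> Pv"
    using unit_iff[of "a * d - b * c"] O_diff O_mult by blast
  finally show ?thesis .
qed

lemma Iw_iff: "mat2 a b c d \<in> Iwahori val \<longleftrightarrow> mat2 a b c d \<in> KK val \<and> c \<in> Pv"
  by (simp add: Iwahori_def)

lemma Iw1_iff: "mat2 a b c d \<in> Iwahori1 val \<longleftrightarrow> mat2 a b c d \<in> Iwahori val \<and> a - 1 \<in> Pv \<and> d - 1 \<in> Pv"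
  by (simp add: Iwahori1_def)

lemma Iw_units: "mat2 a b c d \<in> Iwahori val \<Longrightarrow> a \<in> Ov \<and> a \<notin> Pv \<and> d \<in> Ov \<and> d \<notin> Pv"
proof -
  assume h: "mat2 a b c d \<in> Iwahori val"
  hence e: "a \<in> Ov" "b \<in> Ov" "c \<in> Pv" "d \<in> Ov" "a * d - b * c \<notin> Pv" by (auto simp: Iw_iff KK_iff)
  have bc: "b * c \<in> Pv" using e P_multL by blast
  have "a \<notin> Pv"
  proof
    assume "a \<in> Pv" hence "a * d \<in> Pv" using e P_multR by blast
    hence "a * d - b * c \<in> Pv" using bc P_diff by blast
    thus False using e by blast
  qed
  moreover have "d \<notin> Pv"
  proof
    assume "d \<in> Pv" hence "a * d \<in> Pv" using e P_multL by blast
    hence "a * d - b * c \<in> Pv" using bc P_diff by blast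
    thus False using e by blast
  qed
  ultimately show ?thesis using e by blast
qed

lemma Iw_intro:
  assumes "a \<in> Ov" "a \<notin> Pv" "d \<in> Ov" "d \<notin> Pv" "b \<in> Ov" "c \<in> Pv"
  shows "mat2 a b c d \<in> Iwahori val"
proof -
  have "a * d \<in> Ov \<and> a * d \<notin> Pv" using unit_mult assms by blast
  moreover have "b * c \<in> Pv" using assms P_multL by blast
  ultimately have "a * d - b * c \<notin> Pv" using unit_minusP by blast
  thus ?thesis using assms P_O by (simp add: Iw_iff KK_iff)
qed

lemma Iw1_intro:
  assumes "a - 1 \<in> Pv" "d - 1 \<in> Pv" "b \<in> Ov" "c \<in> Pv"
  shows "mat2 a b c d \<in> Iwahori1 val"
proof -
  have a: "a \<in> Ov" "a \<notin> Pv" using unit_plusP[of 1 "a - 1"] assms by auto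
  have d: "d \<in> Ov" "d \<notin> Pv" using unit_plusP[of 1 "d - 1"] assms by auto
  show ?thesis using Iw_intro[OF a d assms(3,4)] assms by (simp add: Iw1_iff)
qed

lemma KK_GL2: "g \<in> KK val \<Longrightarrow> g \<in> GL2" by (simp add: KK_def GL2_def)
lemma Iw_KK: "g \<in> Iwahori val \<Longrightarrow> g \<in> KK val" by (simp add: Iwahori_def)
lemma Iw1_Iw: "g \<in> Iwahori1 val \<Longrightarrow> g \<in> Iwahori val" by (simp add: Iwahori1_def)

lemma GL2_mat2: "mat2 a b c d \<in> GL2 \<longleftrightarrow> a * d - b * c \<noteq> 0" by (simp add: GL2_def mat2_det)

lemma tm_GL2: "tm pi \<in> GL2" using pi_nz by (simp add: tm_def GL2_mat2)
lemma um_GL2: "um x \<in> GL2" by (simp add: um_def GL2_mat2)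
lemma sm_GL2: "sm \<in> GL2" by (simp add: sm_def GL2_mat2)
lemma um_Iw1: "x \<in> Ov \<Longrightarrow> um x \<in> Iwahori1 val" unfolding um_def by (rule Iw1_intro) auto
lemma m1_notP: "- 1 \<notin> Pv" using P_uminus[of "-1"] by auto
lemma sm_KK: "sm \<in> KK val" using m1_notP by (simp add: sm_def KK_iff)

lemma GL2_mult: "g \<in> GL2 \<Longrightarrow> h \<in> GL2 \<Longrightarrow> g ** h \<in> GL2"
  by (simp add: GL2_def det_mul)

lemma KK_mult: "g \<in> KK val \<Longrightarrow> h \<in> KK val \<Longrightarrow> g ** h \<in> KK val"
proof -
  assume g: "g \<in> KK val" and h: "h \<in> KK val"
  obtain a b c d where ge: "g = mat2 a b c d" using mat2_eta by blast
  obtain a' b' c' d' where he: "h = mat2 a' b' c' d'" using mat2_eta by blast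
  have e: "a \<in> Ov" "b \<in> Ov" "c \<in> Ov" "d \<in> Ov" "a * d - b * c \<notin> Pv"
    "a' \<in> Ov" "b' \<in> Ov" "c' \<in> Ov" "d' \<in> Ov" "a' * d' - b' * c' \<notin> Pv"
    using g h ge he by (auto simp: KK_iff)
  have u: "(a * d - b * c) * (a' * d' - b' * c') \<notin> Pv"
    using unit_mult[of "a * d - b * c" "a' * d' - b' * c'"] e by (auto intro: O_diff O_mult)
  have "det (g ** h) = (a * d - b * c) * (a' * d' - b' * c')"
    by (simp add: det_mul ge he mat2_det)
  hence "det (g ** h) \<notin> Pv" using u by simp
  thus ?thesis using e unfolding ge he mat2_mult KK_iff
    by (simp add: mat2_det[symmetric] mat2_mult[symmetric] det_mul) (auto intro!: O_add O_mult)
qed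

end

locale RP = RL val pi \<iota> for val :: "'f::field \<Rightarrow> int" and pi :: 'f and \<iota> :: "'f set \<Rightarrow> 'k::field" +
  fixes sc :: "'k \<Rightarrow> 'v::ab_group_add \<Rightarrow> 'v" and \<rho> :: "'f^2^2 \<Rightarrow> 'v \<Rightarrow> 'v" and v :: 'v
    and chr :: "'f^2^2 \<Rightarrow> 'k"
  assumes rep: "smooth_rep val sc \<rho>"
    and v_inv: "v \<in> invariants \<rho> (Iwahori1 val)"
    and v_nz: "v \<noteq> 0"
    and chi_char: "\<forall>g\<in>Iwahori val. \<forall>h\<in>Iwahori val. chr (g ** h) = chr g * chr h"
    and chi_nz: "\<forall>g\<in>Iwahori val. chr g \<noteq> 0"
    and v_chi: "\<forall>g\<in>Iwahori val. \<rho> g v = sc (chr g) v"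
begin

lemma vs: "vector_space sc" using rep by (simp add: smooth_rep_def)

sublocale V: vector_space sc by (rule vs)

lemma rho_linear: "g \<in> GL2 \<Longrightarrow> Vector_Spaces.linear sc sc (\<rho> g)"
  using rep by (simp add: smooth_rep_def)

lemma rho_add: "g \<in> GL2 \<Longrightarrow> \<rho> g (x + y) = \<rho> g x + \<rho> g y"
  using rho_linear[of g] unfolding Vector_Spaces.linear_iff by blast

lemma rho_scale: "g \<in> GL2 \<Longrightarrow> \<rho> g (sc c x) = sc c (\<rho> g x)"
  using rho_linear[of g] unfolding Vector_Spaces.linear_iff by blast

lemma rho_zero: "g \<in> GL2 \<Longrightarrow> \<rho> g 0 = 0"
  using rho_scale[of g 0 0] by simp

lemma rho_uminus: "g \<in> GL2 \<Longrightarrow> \<rho> g (- x) = - \<rho> g x"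
  using rho_scale[of g "-1" x] by simp

lemma rho_diff: "g \<in> GL2 \<Longrightarrow> \<rho> g (x - y) = \<rho> g x - \<rho> g y"
  using rho_add[of g x "-y"] rho_uminus[of g y] by simp

lemma rho_sum: "g \<in> GL2 \<Longrightarrow> \<rho> g (sum f A) = (\<Sum>a\<in>A. \<rho> g (f a))"
  by (induction A rule: infinite_finite_induct) (auto simp: rho_zero rho_add)

lemma rho_mult: "g \<in> GL2 \<Longrightarrow> h \<in> GL2 \<Longrightarrow> \<rho> (g ** h) x = \<rho> g (\<rho> h x)"
  using rep by (simp add: smooth_rep_def)

lemma rho_one: "\<rho> (mat 1) x = x"
  using rep by (simp add: smooth_rep_def)

lemma rho_inj: "g \<in> GL2 \<Longrightarrow> \<rho> g x = 0 \<Longrightarrow> x = 0"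
proof -
  assume g: "g \<in> GL2" and z: "\<rho> g x = 0"
  obtain a b c d where ge: "g = mat2 a b c d" using mat2_eta by blast
  have D: "a * d - b * c \<noteq> 0" using g unfolding ge GL2_mat2 .
  define h where "h = mat2 (d / (a * d - b * c)) (- b / (a * d - b * c)) (- c / (a * d - b * c)) (a / (a * d - b * c))"
  have hg: "h ** g = mat 1" using mat_inv[OF D] ge h_def by simp
  have "det h \<noteq> 0" using hg det_mul[of h g] by (metis det_I mult_zero_left zero_neq_one)
  hence hG: "h \<in> GL2" by (simp add: GL2_def)
  have "x = \<rho> (h ** g) x" using hg rho_one by simp
  also have "\<dots> = \<rho> h (\<rho> g x)" using rho_mult hG g by simp
  finally show "x = 0" using z rho_zero hG by simp
qed

lemma v_fix: "g \<in> Iwahori1 val \<Longrightarrow> \<rho> g v = v"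
  using v_inv by (simp add: invariants_def)

lemma chr_I1: "g \<in> Iwahori1 val \<Longrightarrow> chr g = 1"
proof -
  assume g: "g \<in> Iwahori1 val"
  hence "sc (chr g) v = sc 1 v" using v_fix v_chi Iw1_Iw by force
  thus ?thesis using v_nz V.scale_cancel_right by blast
qed

lemma chr_mult: "g \<in> Iwahori val \<Longrightarrow> h \<in> Iwahori val \<Longrightarrow> chr (g ** h) = chr g * chr h"
  using chi_char by blast

lemma chr_nz: "g \<in> Iwahori val \<Longrightarrow> chr g \<noteq> 0" using chi_nz by blast

lemma v_chr: "g \<in> Iwahori val \<Longrightarrow> \<rho> g v = sc (chr g) v" using v_chi by blast

lemma Iw_GL2: "g \<in> Iwahori val \<Longrightarrow> g \<in> GL2" using Iw_KK KK_GL2 by blast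

definition tv where "tv = \<rho> (tm pi) v"
definition ev where "ev z = \<rho> (um (L z)) tv"
definition einf where "einf = \<rho> sm tv"

lemma tv_nz: "tv \<noteq> 0" using rho_inj[OF tm_GL2] v_nz by (auto simp: tv_def)

lemma act_gen:
  assumes g: "mat2 a b c d \<in> Iwahori val" and x: "x \<in> Ov"
  defines "y \<equiv> (a * x + b) / (c * x + d)"
  defines "h \<equiv> mat2 (a - y * c) 0 (c * pi) (c * x + d)"
  shows "\<rho> (mat2 a b c d) (\<rho> (um x) tv) = sc (chr h) (\<rho> (um y) tv)"
    and "h \<in> Iwahori val" and "y \<in> Ov"
    and "mat2 a b c d \<in> Iwahori1 val \<Longrightarrow> h \<in> Iwahori1 val"
    and "det h = a * d - b * c"
proof -
  have u: "a \<in> Ov" "a \<notin> Pv" "d \<in> Ov" "d \<notin> Pv" using Iw_units[OF g] by auto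
  have bc: "b \<in> Ov" "c \<in> Pv" using g by (auto simp: Iw_iff KK_iff)
  have cx: "c * x \<in> Pv" using P_multR bc x by blast
  have den: "c * x + d \<in> Ov" "c * x + d \<notin> Pv" using unit_plusP[OF u(3,4) cx] by (auto simp: add.commute)
  have num: "a * x + b \<in> Ov" using u bc x by (auto intro: O_add O_mult)
  show yO: "y \<in> Ov" unfolding y_def using unit_div num den by blast
  have yc: "y * c \<in> Pv" using P_multL[OF yO bc(2)] .
  have a': "a - y * c \<in> Ov" "a - y * c \<notin> Pv" using unit_minusP[OF u(1,2) yc] by auto
  have cp: "c * pi \<in> Pv" using mult_pi bc P_O by blast
  show hI: "h \<in> Iwahori val" unfolding h_def by (rule Iw_intro[OF a' den]) (auto simp: cp)
  show "mat2 a b c d \<in> Iwahori1 val \<Longrightarrow> h \<in> Iwahori1 val"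
  proof -
    assume "mat2 a b c d \<in> Iwahori1 val"
    hence a1: "a - 1 \<in> Pv" "d - 1 \<in> Pv" by (auto simp: Iw1_iff)
    have "a - y * c - 1 = (a - 1) - y * c" by simp
    hence e1: "a - y * c - 1 \<in> Pv" using P_diff[OF a1(1) yc] by metis
    have "c * x + d - 1 = c * x + (d - 1)" by simp
    hence e2: "c * x + d - 1 \<in> Pv" using P_add[OF cx a1(2)] by metis
    show ?thesis unfolding h_def by (rule Iw1_intro[OF e1 e2]) (auto simp: cp)
  qed
  have nz: "c * x + d \<noteq> 0" using unit_nz den by blast
  have M: "mat2 a b c d ** um x ** tm pi = um y ** tm pi ** h"
    unfolding h_def by (rule mat_M1[OF nz]) (simp add: y_def)
  have hG: "h \<in> GL2" using Iw_GL2 hI by blast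
  have gG: "mat2 a b c d \<in> GL2" using Iw_GL2 g by blast
  have "\<rho> (mat2 a b c d) (\<rho> (um x) tv) = \<rho> (mat2 a b c d ** um x ** tm pi) v"
    by (simp add: tv_def rho_mult gG um_GL2 tm_GL2 GL2_mult)
  also have "\<dots> = \<rho> (um y ** tm pi ** h) v" using M by simp
  also have "\<dots> = \<rho> (um y) (\<rho> (tm pi) (\<rho> h v))"
    by (simp add: rho_mult hG um_GL2 tm_GL2 GL2_mult)
  also have "\<dots> = sc (chr h) (\<rho> (um y) tv)"
    using v_chr[OF hI] by (simp add: tv_def rho_scale um_GL2 tm_GL2)
  finally show "\<rho> (mat2 a b c d) (\<rho> (um x) tv) = sc (chr h) (\<rho> (um y) tv)" .
  show "det h = a * d - b * c" unfolding h_def y_def mat2_det using nz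
    by (simp add: field_simps)
qed

lemma um_tv: "x \<in> Ov \<Longrightarrow> \<rho> (um x) tv = ev (iota x)"
proof -
  assume x: "x \<in> Ov"
  define z where "z = L (iota x)"
  have zO: "z \<in> Ov" "iota z = iota x" using L[of "iota x"] iota_Fq[OF x] by (auto simp: z_def)
  have d: "x - z \<in> Pv" using iota_eq[OF x zO(1)] zO by simp
  have w: "(x - z) / pi \<in> Ov" using div_pi[OF d] .
  have "\<rho> (um x) tv = \<rho> (um x ** tm pi) v" by (simp add: tv_def rho_mult um_GL2 tm_GL2)
  also have "\<dots> = \<rho> (um z ** tm pi ** um ((x - z) / pi)) v" using mat_M10 pi_nz by metis
  also have "\<dots> = \<rho> (um z) (\<rho> (tm pi) (\<rho> (um ((x - z) / pi)) v))"
    by (simp add: rho_mult um_GL2 tm_GL2 GL2_mult)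
  also have "\<dots> = \<rho> (um z) tv" using v_fix[OF um_Iw1[OF w]] by (simp add: tv_def)
  finally show ?thesis by (simp add: ev_def z_def)
qed

lemma ev0: "ev 0 = tv"
proof -
  have "ev 0 = \<rho> (um 0) tv" using um_tv[of 0] by simp
  also have "um 0 = (mat 1 :: 'f^2^2)" by (simp add: um_def mat1_mat2)
  finally show ?thesis by (simp add: rho_one)
qed

lemma act_Iw:
  assumes g: "mat2 a b c d \<in> Iwahori val" and z: "z \<in> Fq"
  defines "h \<equiv> mat2 (a - (a * L z + b) / (c * L z + d) * c) 0 (c * pi) (c * L z + d)"
  shows "\<rho> (mat2 a b c d) (ev z) = sc (chr h) (ev ((iota a * z + iota b) / iota d))"
    and "h \<in> Iwahori val"
    and "mat2 a b c d \<in> Iwahori1 val \<Longrightarrow> h \<in> Iwahori1 val"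
    and "det h = a * d - b * c"
proof -
  have x: "L z \<in> Ov" using L_O[OF z] .
  note A = act_gen[OF g x]
  show "h \<in> Iwahori val" "mat2 a b c d \<in> Iwahori1 val \<Longrightarrow> h \<in> Iwahori1 val" "det h = a * d - b * c"
    using A unfolding h_def by auto
  have u: "a \<in> Ov" "a \<notin> Pv" "d \<in> Ov" "d \<notin> Pv" using Iw_units[OF g] by auto
  have bc: "b \<in> Ov" "c \<in> Pv" "c \<in> Ov" using g P_O by (auto simp: Iw_iff KK_iff)
  have cx: "c * L z \<in> Pv" using P_multR bc x by blast
  have den: "c * L z + d \<in> Ov" "c * L z + d \<notin> Pv" using unit_plusP[OF u(3,4) cx] by (auto simp: add.commute)
  have num: "a * L z + b \<in> Ov" using u bc x by (auto intro: O_add O_mult)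
  have "iota ((a * L z + b) / (c * L z + d)) = iota (a * L z + b) / iota (c * L z + d)"
    using iota_div[OF num den] .
  also have "\<dots> = (iota a * z + iota b) / iota d"
    using iota_add iota_mult u bc x z iota_zero_iff[of c] O_mult by simp
  finally have ie: "iota ((a * L z + b) / (c * L z + d)) = (iota a * z + iota b) / iota d" .
  have "\<rho> (mat2 a b c d) (ev z) = sc (chr h) (\<rho> (um ((a * L z + b) / (c * L z + d))) tv)"
    using A(1) unfolding h_def ev_def .
  also have "\<dots> = sc (chr h) (ev ((iota a * z + iota b) / iota d))"
    using um_tv[OF A(3)] ie by simp
  finally show "\<rho> (mat2 a b c d) (ev z) = sc (chr h) (ev ((iota a * z + iota b) / iota d))" .
qed

lemma act_inf:
  assumes g: "mat2 a b c d \<in> Iwahori val"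
  defines "h \<equiv> mat2 d (c / pi) (b * pi) a"
  shows "\<rho> (mat2 a b c d) einf = sc (chr h) einf"
    and "h \<in> Iwahori val"
    and "mat2 a b c d \<in> Iwahori1 val \<Longrightarrow> h \<in> Iwahori1 val"
    and "det h = a * d - b * c"
proof -
  have u: "a \<in> Ov" "a \<notin> Pv" "d \<in> Ov" "d \<notin> Pv" using Iw_units[OF g] by auto
  have bc: "b \<in> Ov" "c \<in> Pv" using g by (auto simp: Iw_iff KK_iff)
  have c': "c / pi \<in> Ov" using div_pi bc by blast
  have b': "b * pi \<in> Pv" using mult_pi bc by blast
  show hI: "h \<in> Iwahori val" unfolding h_def using Iw_intro[OF u(3,4,1,2) c' b'] .
  show "mat2 a b c d \<in> Iwahori1 val \<Longrightarrow> h \<in> Iwahori1 val"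
    unfolding h_def by (rule Iw1_intro) (auto simp: Iw1_iff c' b')
  show "det h = a * d - b * c" unfolding h_def mat2_det using pi_nz by (simp add: algebra_simps)
  have hG: "h \<in> GL2" using Iw_GL2 hI by blast
  have gG: "mat2 a b c d \<in> GL2" using Iw_GL2 g by blast
  have "\<rho> (mat2 a b c d) einf = \<rho> (mat2 a b c d ** sm ** tm pi) v"
    by (simp add: einf_def tv_def rho_mult gG sm_GL2 tm_GL2 GL2_mult)
  also have "\<dots> = \<rho> (sm ** tm pi ** h) v" using mat_M2[OF pi_nz] h_def by simp
  also have "\<dots> = \<rho> sm (\<rho> (tm pi) (\<rho> h v))"
    by (simp add: rho_mult hG sm_GL2 tm_GL2 GL2_mult)
  also have "\<dots> = sc (chr h) einf"
    using v_chr[OF hI] by (simp add: einf_def tv_def rho_scale sm_GL2 tm_GL2)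
  finally show "\<rho> (mat2 a b c d) einf = sc (chr h) einf" .
qed

lemma s_ev0: "\<rho> sm (ev 0) = einf" by (simp add: ev0 einf_def)

lemma s_einf: "\<rho> sm einf = ev 0"
  by (simp add: ev0 einf_def rho_mult[symmetric] sm_GL2 mat_M7 rho_one)

lemma s_ev:
  assumes z: "z \<in> Fq" "z \<noteq> 0"
  defines "h \<equiv> mat2 (- 1 / L z) 0 pi (L z)"
  shows "\<rho> sm (ev z) = sc (chr h) (ev (1 / z))" and "h \<in> Iwahori val" and "det h = -1"
proof -
  have x: "L z \<in> Ov" "L z \<notin> Pv" using L_O L_unit z by auto
  have x0: "L z \<noteq> 0" using unit_nz x by blast
  have i: "- 1 / L z \<in> Ov" "- 1 / L z \<notin> Pv"
    using unit_inv[OF x] unit_plusP[of 0] by (auto simp: divide_inverse O_uminus m1_notP)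
      (metis P_uminus minus_minus)+
  show hI: "h \<in> Iwahori val" unfolding h_def by (rule Iw_intro[OF i x]) (auto simp: pi_P)
  show "det h = -1" unfolding h_def mat2_det using x0 by simp
  have hG: "h \<in> GL2" using Iw_GL2 hI by blast
  have "\<rho> sm (ev z) = \<rho> (sm ** um (L z) ** tm pi) v"
    by (simp add: ev_def tv_def rho_mult sm_GL2 um_GL2 tm_GL2 GL2_mult)
  also have "\<dots> = \<rho> (um (1 / L z) ** tm pi ** h) v" using mat_M3[OF x0] h_def by simp
  also have "\<dots> = \<rho> (um (1 / L z)) (\<rho> (tm pi) (\<rho> h v))"
    by (simp add: rho_mult hG um_GL2 tm_GL2 GL2_mult)
  also have "\<dots> = sc (chr h) (\<rho> (um (1 / L z)) tv)"
    using v_chr[OF hI] by (simp add: tv_def rho_scale um_GL2 tm_GL2)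
  also have "\<rho> (um (1 / L z)) tv = ev (iota (1 / L z))"
    using um_tv unit_div[OF O_one x] by blast
  also have "iota (1 / L z) = 1 / z" using iota_div[OF O_one x] z by simp
  finally show "\<rho> sm (ev z) = sc (chr h) (ev (1 / z))" .
qed

lemma bruhat: "g \<in> KK val \<Longrightarrow> g \<in> Iwahori val \<or> (\<exists>x b. x \<in> Ov \<and> b \<in> Iwahori val \<and> g = um x ** sm ** b)"
proof -
  assume g: "g \<in> KK val"
  obtain a b c d where ge: "g = mat2 a b c d" using mat2_eta by blast
  have e: "a \<in> Ov" "b \<in> Ov" "c \<in> Ov" "d \<in> Ov" "a * d - b * c \<notin> Pv" using g ge by (auto simp: KK_iff)
  show ?thesis
  proof (cases "c \<in> Pv")
    case True thus ?thesis using g ge by (simp add: Iw_iff)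
  next
    case False
    have c0: "c \<noteq> 0" using False by auto
    have D: "a * d - b * c \<in> Ov" using e by (auto intro: O_diff O_mult)
    have "b - a * d / c = - (a * d - b * c) / c" using c0 by (simp add: field_simps)
    moreover have "- (a * d - b * c) / c \<in> Ov \<and> - (a * d - b * c) / c \<notin> Pv"
    proof -
      have "inverse c \<in> Ov" "inverse c \<notin> Pv" using unit_inv e(3) False by auto
      moreover have "- (a * d - b * c) \<in> Ov" "- (a * d - b * c) \<notin> Pv" using D e(5) O_uminus P_uminus by fastforce+
      ultimately show ?thesis using unit_mult by (simp add: divide_inverse)
    qed
    ultimately have bI: "mat2 c d 0 (b - a * d / c) \<in> Iwahori val"
      using Iw_intro[of c "b - a * d / c" d 0] e False by simp
    have "a / c \<in> Ov" using unit_div e False by blast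
    thus ?thesis using mat_M5[OF c0, of a b d] bI ge by blast
  qed
qed

lemma K_closure:
  assumes I: "\<And>g w. g \<in> Iwahori val \<Longrightarrow> w \<in> W \<Longrightarrow> \<rho> g w \<in> W"
    and S: "\<And>w. w \<in> W \<Longrightarrow> \<rho> sm w \<in> W"
    and g: "g \<in> KK val" and w: "w \<in> W"
  shows "\<rho> g w \<in> W"
proof -
  from bruhat[OF g] show ?thesis
  proof
    assume "g \<in> Iwahori val" thus ?thesis using I w by blast
  next
    assume "\<exists>x b. x \<in> Ov \<and> b \<in> Iwahori val \<and> g = um x ** sm ** b"
    then obtain x b where xb: "x \<in> Ov" "b \<in> Iwahori val" "g = um x ** sm ** b" by blast
    have "\<rho> g w = \<rho> (um x) (\<rho> sm (\<rho> b w))"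
      using xb by (simp add: rho_mult um_GL2 sm_GL2 Iw_GL2 GL2_mult)
    moreover have "um x \<in> Iwahori val" using um_Iw1[OF xb(1)] Iw1_Iw by blast
    ultimately show ?thesis using I S xb w by simp
  qed
qed

end

context RP
begin

definition w :: "nat \<Rightarrow> 'v" where "w j = (\<Sum>z\<in>Fq. sc (z ^ j) (ev z))"
definition tau :: "'k \<Rightarrow> 'v \<Rightarrow> 'v" where "tau \<xi> y = \<rho> (um (L \<xi>)) y"
definition A :: "nat \<Rightarrow> 'v \<Rightarrow> 'v" where "A m y = (\<Sum>\<xi>\<in>Fq. sc (\<xi> ^ m) (tau \<xi> y))"

lemma shift_bij: "\<xi> \<in> Fq \<Longrightarrow> bij_betw (\<lambda>z. z + \<xi>) Fq Fq"
proof (rule bij_betw_imageI)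
  assume x: "\<xi> \<in> Fq"
  show "inj_on (\<lambda>z. z + \<xi>) Fq" by (auto simp: inj_on_def)
  show "(\<lambda>z. z + \<xi>) ` Fq = Fq"
  proof
    show "(\<lambda>z. z + \<xi>) ` Fq \<subseteq> Fq" using Fq_add x by auto
    show "Fq \<subseteq> (\<lambda>z. z + \<xi>) ` Fq"
    proof
      fix z assume "z \<in> Fq"
      hence "z - \<xi> \<in> Fq" using Fq_diff x by auto
      thus "z \<in> (\<lambda>z. z + \<xi>) ` Fq" by (auto intro!: image_eqI[of _ _ "z - \<xi>"])
    qed
  qed
qed

lemma sum_shift: "\<xi> \<in> Fq \<Longrightarrow> (\<Sum>z\<in>Fq. f z) = (\<Sum>z\<in>Fq. f (z + \<xi>))"
  using sum.reindex_bij_betw[OF shift_bij, of \<xi> f] by simp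

lemma scale_bij: "m \<in> Fq \<Longrightarrow> m \<noteq> 0 \<Longrightarrow> bij_betw (\<lambda>z. m * z) Fq Fq"
proof (rule bij_betw_imageI)
  assume m: "m \<in> Fq" "m \<noteq> 0"
  show "inj_on (\<lambda>z. m * z) Fq" using m by (auto simp: inj_on_def)
  show "(\<lambda>z. m * z) ` Fq = Fq"
  proof
    show "(\<lambda>z. m * z) ` Fq \<subseteq> Fq" using Fq_mult m by auto
    show "Fq \<subseteq> (\<lambda>z. m * z) ` Fq"
    proof
      fix z assume "z \<in> Fq"
      hence "z / m \<in> Fq" using Fq_divide m by auto
      moreover have "z = m * (z / m)" using m by simp
      ultimately show "z \<in> (\<lambda>z. m * z) ` Fq" by blast
    qed
  qed
qed

lemma sum_scale: "m \<in> Fq \<Longrightarrow> m \<noteq> 0 \<Longrightarrow> (\<Sum>z\<in>Fq. f z) = (\<Sum>z\<in>Fq. f (m * z))"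
  using sum.reindex_bij_betw[OF scale_bij, of m f] by simp

lemma tau_ev: "\<xi> \<in> Fq \<Longrightarrow> z \<in> Fq \<Longrightarrow> tau \<xi> (ev z) = ev (z + \<xi>)"
proof -
  assume x: "\<xi> \<in> Fq" and z: "z \<in> Fq"
  have "tau \<xi> (ev z) = \<rho> (um (L \<xi>) ** um (L z)) tv" by (simp add: tau_def ev_def rho_mult um_GL2)
  also have "\<dots> = \<rho> (um (L \<xi> + L z)) tv" by (simp add: mat_M6)
  also have "\<dots> = ev (iota (L \<xi> + L z))" using um_tv O_add L_O x z by blast
  also have "iota (L \<xi> + L z) = z + \<xi>" using iota_add L_O x z by simp
  finally show ?thesis .
qed

lemma um_einf: "x \<in> Ov \<Longrightarrow> \<rho> (um x) einf = einf"
proof -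
  assume x: "x \<in> Ov"
  have g: "mat2 1 x 0 1 \<in> Iwahori1 val" using um_Iw1[OF x] by (simp add: um_def)
  note B = act_inf[OF Iw1_Iw[OF g]]
  have "chr (mat2 1 (0 / pi) (x * pi) 1) = 1" using chr_I1 B(3)[OF g] by blast
  thus ?thesis using B(1) by (simp add: um_def)
qed

lemma tau_einf: "\<xi> \<in> Fq \<Longrightarrow> tau \<xi> einf = einf" using um_einf L_O by (simp add: tau_def)

lemma tau_lin: "tau \<xi> (x + y) = tau \<xi> x + tau \<xi> y" "tau \<xi> (sc c x) = sc c (tau \<xi> x)"
  "tau \<xi> (sum f S) = (\<Sum>a\<in>S. tau \<xi> (f a))" "tau \<xi> 0 = 0" "tau \<xi> (x - y) = tau \<xi> x - tau \<xi> y"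
  by (simp_all add: tau_def rho_add rho_scale rho_sum rho_zero rho_diff um_GL2)

lemma sum_ev_shift: "\<xi> \<in> Fq \<Longrightarrow> tau \<xi> (\<Sum>z\<in>Fq. sc (f z) (ev z)) = (\<Sum>z\<in>Fq. sc (f (z - \<xi>)) (ev z))"
proof -
  assume x: "\<xi> \<in> Fq"
  have "tau \<xi> (\<Sum>z\<in>Fq. sc (f z) (ev z)) = (\<Sum>z\<in>Fq. sc (f z) (ev (z + \<xi>)))"
    by (simp add: tau_lin tau_ev x)
  also have "\<dots> = (\<Sum>z\<in>Fq. sc (f (z - \<xi>)) (ev z))"
    using sum_shift[OF x, of "\<lambda>u. sc (f (u - \<xi>)) (ev u)"] by simp
  finally show ?thesis .
qed

lemma bexp: "(\<Sum>z\<in>Fq. sc ((z + c) ^ n) (ev z)) = (\<Sum>k\<le>n. sc (of_nat (n choose k) * c ^ (n - k)) (w k))"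
proof -
  have "(\<Sum>z\<in>Fq. sc ((z + c) ^ n) (ev z)) = (\<Sum>z\<in>Fq. \<Sum>k\<le>n. sc (of_nat (n choose k) * z ^ k * c ^ (n - k)) (ev z))"
    by (simp add: binomial_ring V.scale_sum_left)
  also have "\<dots> = (\<Sum>k\<le>n. \<Sum>z\<in>Fq. sc (of_nat (n choose k) * c ^ (n - k)) (sc (z ^ k) (ev z)))"
    by (subst sum.swap) (simp add: mult_ac)
  also have "\<dots> = (\<Sum>k\<le>n. sc (of_nat (n choose k) * c ^ (n - k)) (w k))"
    by (simp add: w_def V.scale_sum_right)
  finally show ?thesis .
qed

lemma tau_w: "\<xi> \<in> Fq \<Longrightarrow> tau \<xi> (w j) = (\<Sum>k\<le>j. sc (of_nat (j choose k) * (- \<xi>) ^ (j - k)) (w k))"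
  using sum_ev_shift[of \<xi> "\<lambda>z. z ^ j"] bexp[of "- \<xi>" j] by (simp add: w_def)

lemma A_w: "A m (w j) = (\<Sum>k\<le>j. sc (of_nat (j choose k) * (- 1) ^ (j - k) * (\<Sum>\<xi>\<in>Fq. \<xi> ^ (m + (j - k)))) (w k))"
proof -
  have "A m (w j) = (\<Sum>\<xi>\<in>Fq. \<Sum>k\<le>j. sc (\<xi> ^ m * (of_nat (j choose k) * (- \<xi>) ^ (j - k))) (w k))"
    by (simp add: A_def tau_w V.scale_sum_right)
  also have "\<dots> = (\<Sum>k\<le>j. \<Sum>\<xi>\<in>Fq. sc (of_nat (j choose k) * (- 1) ^ (j - k) * \<xi> ^ (m + (j - k))) (w k))"
  proof (subst sum.swap, intro sum.cong refl)
    fix k and \<xi> :: 'k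
    have "\<xi> ^ m * (of_nat (j choose k) * (- \<xi>) ^ (j - k)) = of_nat (j choose k) * (- 1) ^ (j - k) * \<xi> ^ (m + (j - k))"
    proof -
      have h: "(- \<xi>) ^ (j - k) = (- 1) ^ (j - k) * \<xi> ^ (j - k)" by (simp flip: power_mult_distrib)
      show ?thesis unfolding h by (simp add: power_add mult_ac)
    qed
    thus "sc (\<xi> ^ m * (of_nat (j choose k) * (- \<xi>) ^ (j - k))) (w k) = sc (of_nat (j choose k) * (- 1) ^ (j - k) * \<xi> ^ (m + (j - k))) (w k)"
      by simp
  qed
  also have "\<dots> = (\<Sum>k\<le>j. sc (of_nat (j choose k) * (- 1) ^ (j - k) * (\<Sum>\<xi>\<in>Fq. \<xi> ^ (m + (j - k)))) (w k))"
    by (simp add: V.scale_sum_left[symmetric] sum_distrib_left)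
  finally show ?thesis .
qed

lemma nat_no_dvd: "0 < d \<Longrightarrow> d < n \<Longrightarrow> n < 2 * d \<Longrightarrow> \<not> d dvd (n::nat)"
proof
  assume a: "0 < d" "d < n" "n < 2 * d" "d dvd n"
  then obtain c where c: "n = d * c" by blast
  show False
  proof (cases c)
    case 0 thus ?thesis using a c by simp
  next
    case (Suc c')
    thus ?thesis
    proof (cases c')
      case 0 thus ?thesis using a c Suc by simp
    next
      case (Suc c'')
      hence "n = 2 * d + d * c''" using c \<open>c = Suc c'\<close> by (simp add: algebra_simps)
      thus ?thesis using a by simp
    qed
  qed
qed

lemma iso_exp:
  assumes k0: "k0 \<le> q - 2" and j: "j \<le> q - 1" and kj: "k0 \<le> j" and k: "k \<le> j"
  shows "(\<Sum>\<xi>\<in>Fq. \<xi> ^ ((q - 1 + k0 - j) + (j - k))) = (if k = k0 then -1 else 0)"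
proof -
  have q2: "2 \<le> q" using q_ge2 .
  define n where "n = (q - 1 + k0 - j) + (j - k)"
  have n: "n = q - 1 + k0 - k" using j kj k q2 unfolding n_def by simp
  have "(0 < n \<and> (q - 1) dvd n) \<longleftrightarrow> k = k0"
  proof (cases "k = k0")
    case True thus ?thesis using n q2 by simp
  next
    case False
    show ?thesis
    proof (cases "k < k0")
      case True
      have "q - 1 < n" "n < 2 * (q - 1)" using n True k0 q2 by auto
      thus ?thesis using nat_no_dvd[of "q - 1" n] q2 False by auto
    next
      case False
      hence "n < q - 1" using n \<open>k \<noteq> k0\<close> j k q2 by arith
      thus ?thesis using \<open>k \<noteq> k0\<close> by (auto dest: dvd_imp_le)
    qed
  qed
  thus ?thesis using psum[of n] unfolding n_def by simp
qed

lemma A_iso: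
  assumes k0: "k0 \<le> q - 2" and j: "j \<le> q - 1" and kj: "k0 \<le> j"
  shows "A (q - 1 + k0 - j) (w j) = sc (- (of_nat (j choose k0) * (- 1) ^ (j - k0))) (w k0)"
proof -
  have "A (q - 1 + k0 - j) (w j) = (\<Sum>k\<le>j. sc (of_nat (j choose k) * (- 1) ^ (j - k) * (if k = k0 then -1 else 0)) (w k))"
    unfolding A_w using iso_exp[OF k0 j kj] by simp
  also have "\<dots> = (\<Sum>k\<in>{k0}. sc (of_nat (j choose k) * (- 1) ^ (j - k) * (if k = k0 then -1 else 0)) (w k))"
    by (rule sum.mono_neutral_right) (use kj in auto)
  finally show ?thesis by simp
qed

end

context RP
begin

definition Ecomb :: "'v set" where "Ecomb = {y. \<exists>a. y = (\<Sum>z\<in>Fq. sc (a z) (ev z))}"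
definition Wcomb :: "'v set" where "Wcomb = {y. \<exists>c. y = (\<Sum>k<q. sc (c k) (w k))}"
definition Kst :: "'v set \<Rightarrow> bool" where "Kst U \<longleftrightarrow> (\<forall>g\<in>KK val. \<forall>u\<in>U. \<rho> g u \<in> U)"

lemma Wcomb_sub: "V.subspace Wcomb"
proof (unfold V.subspace_def, intro conjI ballI allI)
  show "0 \<in> Wcomb" unfolding Wcomb_def by (auto intro!: exI[of _ "\<lambda>_. 0"])
next
  fix x y assume "x \<in> Wcomb" "y \<in> Wcomb"
  then obtain c1 c2 where "x = (\<Sum>k<q. sc (c1 k) (w k))" "y = (\<Sum>k<q. sc (c2 k) (w k))" by (auto simp: Wcomb_def)
  hence "x + y = (\<Sum>k<q. sc (c1 k + c2 k) (w k))" by (simp add: sum.distrib V.scale_left_distrib)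
  thus "x + y \<in> Wcomb" unfolding Wcomb_def by (intro CollectI exI[of _ "\<lambda>k. c1 k + c2 k"])
next
  fix c and x assume "x \<in> Wcomb"
  then obtain c1 where "x = (\<Sum>k<q. sc (c1 k) (w k))" by (auto simp: Wcomb_def)
  hence "sc c x = (\<Sum>k<q. sc (c * c1 k) (w k))" by (simp add: V.scale_sum_right)
  thus "sc c x \<in> Wcomb" unfolding Wcomb_def by (intro CollectI exI[of _ "\<lambda>k. c * c1 k"])
qed

lemma w_Wcomb: "k < q \<Longrightarrow> w k \<in> Wcomb"
proof -
  assume k: "k < q"
  have "w k = (\<Sum>i<q. sc (if i = k then 1 else 0) (w i))"
    by (subst sum.mono_neutral_right[of "{..<q}" "{k}"]) (use k in auto)
  thus ?thesis unfolding Wcomb_def by (intro CollectI exI[of _ "\<lambda>i. if i = k then 1 else 0"])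
qed

lemma w0_sum: "w 0 = (\<Sum>z\<in>Fq. ev z)" by (simp add: w_def)

lemma ev_decomp: "\<mu> \<in> Fq \<Longrightarrow> ev \<mu> = w 0 - (\<Sum>k\<le>q-1. sc (of_nat ((q-1) choose k) * (- \<mu>) ^ (q - 1 - k)) (w k))"
proof -
  assume m: "\<mu> \<in> Fq"
  have q2: "2 \<le> q" using q_ge2 .
  have "(\<Sum>z\<in>Fq. sc ((z + - \<mu>) ^ (q - 1)) (ev z)) = (\<Sum>z\<in>Fq - {\<mu>}. ev z)"
  proof -
    have "(\<Sum>z\<in>Fq. sc ((z + - \<mu>) ^ (q - 1)) (ev z)) = sc ((\<mu> + - \<mu>) ^ (q - 1)) (ev \<mu>) + (\<Sum>z\<in>Fq - {\<mu>}. sc ((z + - \<mu>) ^ (q - 1)) (ev z))"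
      using finite_Fq m by (simp add: sum.remove)
    also have "sc ((\<mu> + - \<mu>) ^ (q - 1)) (ev \<mu>) = 0" using q2 by simp
    also have "(\<Sum>z\<in>Fq - {\<mu>}. sc ((z + - \<mu>) ^ (q - 1)) (ev z)) = (\<Sum>z\<in>Fq - {\<mu>}. ev z)"
    proof (rule sum.cong)
      fix z assume z: "z \<in> Fq - {\<mu>}"
      hence "(z + - \<mu>) ^ (q - 1) = 1" using fermat[of "z + - \<mu>"] Fq_diff[of z \<mu>] m by simp
      thus "sc ((z + - \<mu>) ^ (q - 1)) (ev z) = ev z" by simp
    qed simp
    finally show ?thesis by simp
  qed
  also have "\<dots> = w 0 - ev \<mu>" using finite_Fq m by (simp add: w0_sum sum.remove)
  finally have "w 0 - ev \<mu> = (\<Sum>k\<le>q-1. sc (of_nat ((q-1) choose k) * (- \<mu>) ^ (q - 1 - k)) (w k))"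
    using bexp[of "- \<mu>" "q - 1"] by simp
  thus ?thesis by (simp add: algebra_simps)
qed

lemma ev_Wcomb: "\<mu> \<in> Fq \<Longrightarrow> ev \<mu> \<in> Wcomb"
proof -
  assume m: "\<mu> \<in> Fq"
  have q1: "{..q-1} = {..<q}" using q_ge2 by auto
  have "w 0 \<in> Wcomb" using w_Wcomb q_ge2 by simp
  moreover have "(\<Sum>k\<le>q-1. sc (of_nat ((q-1) choose k) * (- \<mu>) ^ (q - 1 - k)) (w k)) \<in> Wcomb"
    unfolding q1 by (rule V.subspace_sum[OF Wcomb_sub]) (auto intro!: V.subspace_scale[OF Wcomb_sub] w_Wcomb)
  ultimately show ?thesis using ev_decomp[OF m] V.subspace_diff[OF Wcomb_sub] by simp
qed

lemma Ecomb_Wcomb: "Ecomb \<subseteq> Wcomb"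
proof
  fix y assume "y \<in> Ecomb"
  then obtain a where ya: "y = (\<Sum>z\<in>Fq. sc (a z) (ev z))" by (auto simp: Ecomb_def)
  show "y \<in> Wcomb" unfolding ya by (intro V.subspace_sum[OF Wcomb_sub] V.subspace_scale[OF Wcomb_sub] ev_Wcomb)
qed

definition dmat :: "'k \<Rightarrow> 'f^2^2" where "dmat m = mat2 (L m) 0 0 1"

lemma dmat_Iw: "m \<in> Fq \<Longrightarrow> m \<noteq> 0 \<Longrightarrow> dmat m \<in> Iwahori val"
  unfolding dmat_def by (rule Iw_intro) (auto simp: L_O L_unit)

lemma dm_ev: "m \<in> Fq \<Longrightarrow> m \<noteq> 0 \<Longrightarrow> z \<in> Fq \<Longrightarrow> \<rho> (dmat m) (ev z) = sc (chr (dmat m)) (ev (m * z))"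
  using act_Iw(1)[OF dmat_Iw[unfolded dmat_def], of m z] by (simp add: dmat_def)

lemma dm_w: "m \<in> Fq \<Longrightarrow> m \<noteq> 0 \<Longrightarrow> \<rho> (dmat m) (w i) = sc (chr (dmat m) * (inverse m) ^ i) (w i)"
proof -
  assume m: "m \<in> Fq" "m \<noteq> 0"
  have G: "dmat m \<in> GL2" using dmat_Iw[OF m] Iw_GL2 by blast
  have "\<rho> (dmat m) (w i) = sc (chr (dmat m)) (\<Sum>z\<in>Fq. sc (z ^ i) (ev (m * z)))"
    by (simp add: w_def rho_sum rho_scale G dm_ev m V.scale_sum_right mult.commute)
  also have "(\<Sum>z\<in>Fq. sc (z ^ i) (ev (m * z))) = (\<Sum>u\<in>Fq. sc ((inverse m) ^ i * u ^ i) (ev u))"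
    using sum_scale[OF m, of "\<lambda>u. sc ((inverse m) ^ i * u ^ i) (ev u)"] m
    by (simp add: power_mult_distrib[symmetric] mult.assoc[symmetric])
  also have "\<dots> = sc ((inverse m) ^ i) (w i)" by (simp add: w_def V.scale_sum_right)
  finally show ?thesis by simp
qed

definition Pk :: "nat \<Rightarrow> 'v \<Rightarrow> 'v" where
  "Pk k y = (\<Sum>m\<in>Fq - {0}. sc (m ^ k / chr (dmat m)) (\<rho> (dmat m) y))"

lemma inv_pow: "m \<in> Fq \<Longrightarrow> m \<noteq> 0 \<Longrightarrow> inverse m = m ^ (q - 2)"
proof -
  assume m: "m \<in> Fq" "m \<noteq> 0"
  have s: "Suc (q - 2) = q - 1" using q_ge2 by simp
  have "m * m ^ (q - 2) = m ^ (q - 1)" by (simp only: power_Suc[symmetric] s)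
  hence "m * m ^ (q - 2) = 1" using fermat[OF m] by simp
  thus ?thesis by (rule inverse_unique)
qed

lemma Pk_w: "Pk k (w i) = sc (if (q - 1) dvd (k + (q - 2) * i) then -1 else 0) (w i)"
proof -
  have "Pk k (w i) = (\<Sum>m\<in>Fq - {0}. sc (m ^ (k + (q - 2) * i)) (w i))"
    unfolding Pk_def
  proof (rule sum.cong)
    fix m assume m: "m \<in> Fq - {0}"
    have c: "chr (dmat m) \<noteq> 0" using chr_nz dmat_Iw m by auto
    have "m ^ k / chr (dmat m) * (chr (dmat m) * inverse m ^ i) = m ^ (k + (q - 2) * i)"
      using c inv_pow[of m] m by (simp add: power_add power_mult)
    thus "sc (m ^ k / chr (dmat m)) (\<rho> (dmat m) (w i)) = sc (m ^ (k + (q - 2) * i)) (w i)"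
      using dm_w m by simp
  qed simp
  also have "\<dots> = sc (\<Sum>m\<in>Fq - {0}. m ^ (k + (q - 2) * i)) (w i)" by (simp add: V.scale_sum_left)
  finally show ?thesis using psum_nz by simp
qed

lemma dvd_crit:
  assumes k: "1 \<le> k" "k \<le> q - 2" and i: "i \<le> q - 1"
  shows "(q - 1) dvd (k + (q - 2) * i) \<longleftrightarrow> i = k"
proof -
  have q2: "2 \<le> q" using q_ge2 .
  have e0: "int (q - 2) = int q - 2" "int (q - 1) = int q - 1" using q2 by auto
  have e: "int (k + (q - 2) * i) = (int k - int i) + int (q - 1) * int i"
    by (simp only: of_nat_add of_nat_mult e0) (simp add: algebra_simps)
  have "(q - 1) dvd (k + (q - 2) * i) \<longleftrightarrow> int (q - 1) dvd int (k + (q - 2) * i)" by (simp only: of_nat_dvd_iff)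
  also have "\<dots> \<longleftrightarrow> int (q - 1) dvd (int k - int i)" unfolding e by (simp add: dvd_add_left_iff)
  also have "\<dots> \<longleftrightarrow> i = k"
  proof
    assume d: "int (q - 1) dvd (int k - int i)"
    show "i = k"
    proof (rule ccontr)
      assume "i \<noteq> k"
      hence "int k - int i \<noteq> 0" by simp
      from dvd_imp_le_int[OF this d] have "int (q - 1) \<le> \<bar>int k - int i\<bar>" by simp
      thus False using k i q2 by linarith
    qed
  qed simp
  finally show ?thesis .
qed

lemma Pk_w_mid: "1 \<le> k \<Longrightarrow> k \<le> q - 2 \<Longrightarrow> i < q \<Longrightarrow> Pk k (w i) = (if i = k then - w i else 0)"
  using Pk_w[of k i] dvd_crit[of k i] by auto

lemma Kst_Iw: "Kst U \<Longrightarrow> g \<in> Iwahori val \<Longrightarrow> u \<in> U \<Longrightarrow> \<rho> g u \<in> U"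
  using Iw_KK by (auto simp: Kst_def)

lemma Kst_tau: "Kst U \<Longrightarrow> \<xi> \<in> Fq \<Longrightarrow> u \<in> U \<Longrightarrow> tau \<xi> u \<in> U"
  unfolding tau_def using Kst_Iw um_Iw1 Iw1_Iw L_O by blast

lemma Kst_A: "Kst U \<Longrightarrow> V.subspace U \<Longrightarrow> u \<in> U \<Longrightarrow> A m u \<in> U"
  unfolding A_def by (auto intro!: V.subspace_sum V.subspace_scale Kst_tau)

lemma Kst_Pk: "Kst U \<Longrightarrow> V.subspace U \<Longrightarrow> u \<in> U \<Longrightarrow> Pk k u \<in> U"
  unfolding Pk_def by (auto intro!: V.subspace_sum V.subspace_scale Kst_Iw dmat_Iw)

end

context RP
begin

lemma dmat_GL2: "m \<in> Fq - {0} \<Longrightarrow> dmat m \<in> GL2" using dmat_Iw Iw_GL2 by blast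

lemma Pk_add: "Pk k (x + y) = Pk k x + Pk k y"
  by (simp add: Pk_def rho_add dmat_GL2 V.scale_right_distrib sum.distrib)

lemma Pk_scale: "Pk k (sc c x) = sc c (Pk k x)"
  by (simp add: Pk_def rho_scale dmat_GL2 V.scale_sum_right mult.commute)

lemma Pk_zero: "Pk k 0 = 0" by (simp add: Pk_def rho_zero dmat_GL2)

lemma Pk_sum: "Pk k (sum f S) = (\<Sum>i\<in>S. Pk k (f i))"
  by (induction S rule: infinite_finite_induct) (simp_all add: Pk_add Pk_zero)

lemma A_add: "A m (x + y) = A m x + A m y"
  by (simp add: A_def tau_lin V.scale_right_distrib sum.distrib)

lemma A_scale: "A m (sc c x) = sc c (A m x)"
  by (simp add: A_def tau_lin V.scale_sum_right mult.commute)

lemma A0_w0: "A 0 (w 0) = 0"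
  using A_w[of 0 0] psum[of 0] by simp

lemma A0_wq: "A 0 (w (q - 1)) = sc (- ((- 1) ^ (q - 1))) (w 0)"
  using A_iso[of 0 "q - 1"] q_ge2 by simp

lemma scale_mem: "V.subspace U \<Longrightarrow> sc c x \<in> U \<Longrightarrow> c \<noteq> 0 \<Longrightarrow> x \<in> U"
  using V.subspace_scale[of U "sc c x" "inverse c"] by simp

lemma TP:
  assumes K: "Kst U" and S: "V.subspace U" and yU: "y \<in> U" and yE: "y \<in> Ecomb" and y0: "y \<noteq> 0"
  shows "\<exists>i<q. w i \<in> U \<and> w i \<noteq> 0"
proof -
  obtain c where yc: "y = (\<Sum>k<q. sc (c k) (w k))" using Ecomb_Wcomb yE by (auto simp: Wcomb_def)
  have q2: "2 \<le> q" using q_ge2 .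
  show ?thesis
  proof (cases "\<exists>k. 1 \<le> k \<and> k \<le> q - 2 \<and> sc (c k) (w k) \<noteq> 0")
    case True
    then obtain k where k: "1 \<le> k" "k \<le> q - 2" "sc (c k) (w k) \<noteq> 0" by blast
    have "Pk k y = (\<Sum>i<q. sc (c i) (if i = k then - w i else 0))"
      unfolding yc Pk_sum Pk_scale using Pk_w_mid[OF k(1,2)] by simp
    also have "\<dots> = (\<Sum>i\<in>{k}. sc (c i) (if i = k then - w i else 0))"
      by (rule sum.mono_neutral_right) (use k q2 in auto)
    finally have "Pk k y = sc (- c k) (w k)" by simp
    hence sU: "sc (- c k) (w k) \<in> U" using Kst_Pk[OF K S yU] by metis
    have "c k \<noteq> 0" "w k \<noteq> 0" using k(3) by auto
    hence "w k \<in> U" using scale_mem[OF S sU] by simp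
    thus ?thesis using \<open>w k \<noteq> 0\<close> k q2 by (intro exI[of _ k]) auto
  next
    case False
    hence mid: "\<And>k. 1 \<le> k \<Longrightarrow> k \<le> q - 2 \<Longrightarrow> sc (c k) (w k) = 0" by blast
    have "y = (\<Sum>k\<in>{0, q - 1}. sc (c k) (w k))"
    proof -
      have "\<forall>i\<in>{..<q} - {0, q - 1}. sc (c i) (w i) = 0"
      proof
        fix i assume "i \<in> {..<q} - {0, q - 1}"
        hence "1 \<le> i" "i \<le> q - 2" by auto
        thus "sc (c i) (w i) = 0" using mid by blast
      qed
      thus ?thesis unfolding yc by (intro sum.mono_neutral_right) (use q2 in auto)
    qed
    hence yz: "y = sc (c 0) (w 0) + sc (c (q - 1)) (w (q - 1))" using q2 by simp
    have "A 0 y = sc (c (q - 1) * (- ((- 1) ^ (q - 1)))) (w 0)"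
      unfolding yz A_add A_scale A0_w0 A0_wq by simp
    hence AU: "sc (c (q - 1) * (- ((- 1) ^ (q - 1)))) (w 0) \<in> U" using Kst_A[OF K S yU] by metis
    show ?thesis
    proof (cases "c (q - 1) = 0")
      case True
      hence "y = sc (c 0) (w 0)" using yz by simp
      hence "c 0 \<noteq> 0" "w 0 \<noteq> 0" "w 0 \<in> U" using y0 yU scale_mem[OF S] by auto
      thus ?thesis using q2 by (intro exI[of _ 0]) auto
    next
      case False
      show ?thesis
      proof (cases "w 0 = 0")
        case True
        hence "y = sc (c (q - 1)) (w (q - 1))" using yz by simp
        hence "w (q - 1) \<noteq> 0" "w (q - 1) \<in> U" using y0 yU scale_mem[OF S] False by auto
        thus ?thesis using q2 by (intro exI[of _ "q - 1"]) auto
      next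
        case w0: False
        have "c (q - 1) * (- ((- 1) ^ (q - 1))) \<noteq> 0" using False by simp
        hence "w 0 \<in> U" using AU scale_mem[OF S] by blast
        thus ?thesis using w0 q2 by (intro exI[of _ 0]) auto
      qed
    qed
  qed
qed

lemma MI:
  assumes K: "Kst U" and S: "V.subspace U" and j: "j < q" and wj: "w j \<in> U"
    and mn: "\<And>k. k < j \<Longrightarrow> w k \<in> U \<Longrightarrow> w k = 0" and x: "\<xi> \<in> Fq"
  shows "tau \<xi> (w j) = w j"
proof -
  have terms: "sc (of_nat (j choose k) * (- \<xi>) ^ (j - k)) (w k) = 0" if k: "k < j" for k
  proof (cases "(of_nat (j choose k) :: 'k) = 0")
    case True thus ?thesis by simp
  next
    case False
    have "A (q - 1 + k - j) (w j) = sc (- (of_nat (j choose k) * (- 1) ^ (j - k))) (w k)"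
      by (rule A_iso) (use k j in auto)
    hence "sc (- (of_nat (j choose k) * (- 1) ^ (j - k))) (w k) \<in> U" using Kst_A[OF K S wj] by metis
    moreover have "- (of_nat (j choose k) * (- 1) ^ (j - k)) \<noteq> (0::'k)" using False by simp
    ultimately have "w k \<in> U" using scale_mem[OF S] by blast
    thus ?thesis using mn k by simp
  qed
  have "tau \<xi> (w j) = (\<Sum>k\<le>j. sc (of_nat (j choose k) * (- \<xi>) ^ (j - k)) (w k))" using tau_w[OF x] .
  also have "\<dots> = (\<Sum>k\<in>{j}. sc (of_nat (j choose k) * (- \<xi>) ^ (j - k)) (w k))"
    by (rule sum.mono_neutral_right) (use terms in auto)
  finally show ?thesis by simp
qed

lemma I1_ev: "g \<in> Iwahori1 val \<Longrightarrow> z \<in> Fq \<Longrightarrow> \<rho> g (ev z) = ev (z + iota (g$1$2))"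
proof -
  assume g: "g \<in> Iwahori1 val" and z: "z \<in> Fq"
  obtain a b c d where ge: "g = mat2 a b c d" using mat2_eta by blast
  have gI: "mat2 a b c d \<in> Iwahori val" using g ge Iw1_Iw by simp
  note B = act_Iw[OF gI z]
  have a1: "a - 1 \<in> Pv" "d - 1 \<in> Pv" using g ge by (auto simp: Iw1_iff)
  have ad: "a \<in> Ov" "d \<in> Ov" "b \<in> Ov" using gI by (auto simp: Iw_iff KK_iff)
  have "iota a = 1" "iota d = 1" using iota_eq[of a 1] iota_eq[of d 1] a1 ad by auto
  moreover have "chr (mat2 (a - (a * L z + b) / (c * L z + d) * c) 0 (c * pi) (c * L z + d)) = 1"
    using B(3) g ge chr_I1 by simp
  ultimately show ?thesis using B(1) ge by simp
qed

lemma w_I1: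
  assumes inv: "\<And>\<xi>. \<xi> \<in> Fq \<Longrightarrow> tau \<xi> (w j) = w j"
  shows "w j \<in> invariants \<rho> (Iwahori1 val)"
proof -
  have "\<rho> g (w j) = w j" if g: "g \<in> Iwahori1 val" for g
  proof -
    have G: "g \<in> GL2" using g Iw1_Iw Iw_GL2 by blast
    have b: "g$1$2 \<in> Ov" using g by (auto simp: Iwahori1_def Iwahori_def KK_def)
    have "\<rho> g (w j) = (\<Sum>z\<in>Fq. sc (z ^ j) (ev (z + iota (g$1$2))))"
      by (simp add: w_def rho_sum rho_scale G I1_ev g)
    also have "\<dots> = tau (iota (g$1$2)) (w j)"
      by (simp add: w_def tau_lin tau_ev iota_Fq b)
    finally show ?thesis using inv iota_Fq b by simp
  qed
  thus ?thesis by (simp add: invariants_def)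
qed

end

context VL
begin

lemma Iw_mult: "g \<in> Iwahori val \<Longrightarrow> h \<in> Iwahori val \<Longrightarrow> g ** h \<in> Iwahori val"
proof -
  assume g: "g \<in> Iwahori val" and h: "h \<in> Iwahori val"
  have K: "g ** h \<in> KK val" using KK_mult Iw_KK g h by blast
  obtain a b c d where ge: "g = mat2 a b c d" using mat2_eta by blast
  obtain a' b' c' d' where he: "h = mat2 a' b' c' d'" using mat2_eta by blast
  have e: "c \<in> Pv" "d \<in> Ov" "a' \<in> Ov" "c' \<in> Pv" using g h ge he by (auto simp: Iw_iff KK_iff)
  have "c * a' + d * c' \<in> Pv" using e P_multR P_multL P_add by blast
  thus ?thesis using K ge he by (simp add: mat2_mult Iw_iff)
qed

end

context RP
begin

definition Vcomb :: "'v set" where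
  "Vcomb = {y. \<exists>a b. y = (\<Sum>z\<in>Fq. sc (a z) (ev z)) + sc b einf}"

lemma Ecomb_sub: "V.subspace Ecomb"
proof (unfold V.subspace_def, intro conjI ballI allI)
  show "0 \<in> Ecomb" unfolding Ecomb_def by (intro CollectI exI[of _ "\<lambda>_. 0"]) simp
next
  fix x y assume "x \<in> Ecomb" "y \<in> Ecomb"
  then obtain c1 c2 where "x = (\<Sum>k\<in>Fq. sc (c1 k) (ev k))" "y = (\<Sum>k\<in>Fq. sc (c2 k) (ev k))" by (auto simp: Ecomb_def)
  hence "x + y = (\<Sum>k\<in>Fq. sc (c1 k + c2 k) (ev k))" by (simp add: sum.distrib V.scale_left_distrib)
  thus "x + y \<in> Ecomb" unfolding Ecomb_def by (intro CollectI exI[of _ "\<lambda>k. c1 k + c2 k"])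
next
  fix c and x assume "x \<in> Ecomb"
  then obtain c1 where "x = (\<Sum>k\<in>Fq. sc (c1 k) (ev k))" by (auto simp: Ecomb_def)
  hence "sc c x = (\<Sum>k\<in>Fq. sc (c * c1 k) (ev k))" by (simp add: V.scale_sum_right)
  thus "sc c x \<in> Ecomb" unfolding Ecomb_def by (intro CollectI exI[of _ "\<lambda>k. c * c1 k"])
qed

lemma ev_Ecomb: "z \<in> Fq \<Longrightarrow> ev z \<in> Ecomb"
proof -
  assume z: "z \<in> Fq"
  have "ev z = (\<Sum>k\<in>Fq. sc (if k = z then 1 else 0) (ev k))"
    by (subst sum.mono_neutral_right[of Fq "{z}"]) (use z finite_Fq in auto)
  thus ?thesis unfolding Ecomb_def by (intro CollectI exI[of _ "\<lambda>k. if k = z then 1 else 0"])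
qed

lemma Ecomb_in: "\<lbrakk>finite S; \<And>i. i \<in> S \<Longrightarrow> f i \<in> Fq\<rbrakk> \<Longrightarrow> (\<Sum>i\<in>S. sc (c i) (ev (f i))) \<in> Ecomb"
  by (intro V.subspace_sum[OF Ecomb_sub] V.subspace_scale[OF Ecomb_sub] ev_Ecomb) auto

lemma w_Ecomb: "w j \<in> Ecomb" unfolding w_def using Ecomb_in[of Fq "\<lambda>z. z"] finite_Fq by simp

lemma Vcomb_sub: "V.subspace Vcomb"
proof (unfold V.subspace_def, intro conjI ballI allI)
  show "0 \<in> Vcomb" unfolding Vcomb_def by (intro CollectI exI[of _ "\<lambda>_. 0"] exI[of _ 0]) simp
next
  fix x y assume "x \<in> Vcomb" "y \<in> Vcomb"
  then obtain c1 c2 b1 b2 where "x = (\<Sum>k\<in>Fq. sc (c1 k) (ev k)) + sc b1 einf" "y = (\<Sum>k\<in>Fq. sc (c2 k) (ev k)) + sc b2 einf" by (auto simp: Vcomb_def)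
  hence "x + y = (\<Sum>k\<in>Fq. sc (c1 k + c2 k) (ev k)) + sc (b1 + b2) einf" by (simp add: sum.distrib V.scale_left_distrib)
  thus "x + y \<in> Vcomb" unfolding Vcomb_def by (intro CollectI exI[of _ "\<lambda>k. c1 k + c2 k"] exI[of _ "b1 + b2"])
next
  fix c and x assume "x \<in> Vcomb"
  then obtain c1 b1 where "x = (\<Sum>k\<in>Fq. sc (c1 k) (ev k)) + sc b1 einf" by (auto simp: Vcomb_def)
  hence "sc c x = (\<Sum>k\<in>Fq. sc (c * c1 k) (ev k)) + sc (c * b1) einf" by (simp add: V.scale_sum_right V.scale_right_distrib)
  thus "sc c x \<in> Vcomb" unfolding Vcomb_def by (intro CollectI exI[of _ "\<lambda>k. c * c1 k"] exI[of _ "c * b1"])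
qed

lemma Ecomb_Vcomb: "Ecomb \<subseteq> Vcomb"
  unfolding Ecomb_def Vcomb_def by (auto intro!: exI[of _ 0])

lemma einf_Vcomb: "einf \<in> Vcomb"
  unfolding Vcomb_def by (intro CollectI exI[of _ "\<lambda>_. 0"] exI[of _ 1]) simp

lemma Vcomb_cases: "y \<in> Vcomb \<Longrightarrow> (\<And>e b. e \<in> Ecomb \<Longrightarrow> y = e + sc b einf \<Longrightarrow> thesis) \<Longrightarrow> thesis"
  unfolding Vcomb_def Ecomb_def by blast

lemma lin_closed:
  assumes G: "g \<in> GL2" and e: "\<And>z. z \<in> Fq \<Longrightarrow> \<rho> g (ev z) \<in> Vcomb" and i: "\<rho> g einf \<in> Vcomb"
    and y: "y \<in> Vcomb"
  shows "\<rho> g y \<in> Vcomb"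
proof -
  obtain a b where "y = (\<Sum>z\<in>Fq. sc (a z) (ev z)) + sc b einf" using y by (auto simp: Vcomb_def)
  hence "\<rho> g y = (\<Sum>z\<in>Fq. sc (a z) (\<rho> g (ev z))) + sc b (\<rho> g einf)"
    by (simp add: rho_add rho_sum rho_scale G)
  also have "\<dots> \<in> Vcomb" using e i
    by (intro V.subspace_add[OF Vcomb_sub] V.subspace_sum[OF Vcomb_sub] V.subspace_scale[OF Vcomb_sub]) auto
  finally show ?thesis .
qed

lemma Iw_ev_Vcomb: "g \<in> Iwahori val \<Longrightarrow> z \<in> Fq \<Longrightarrow> \<rho> g (ev z) \<in> Vcomb"
proof -
  assume g: "g \<in> Iwahori val" and z: "z \<in> Fq"
  obtain a b c d where ge: "g = mat2 a b c d" using mat2_eta by blast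
  have gI: "mat2 a b c d \<in> Iwahori val" using g ge by simp
  have ad: "a \<in> Ov" "b \<in> Ov" "d \<in> Ov" using gI by (auto simp: Iw_iff KK_iff)
  have "(iota a * z + iota b) / iota d \<in> Fq"
    using ad z by (intro Fq_divide Fq_add Fq_mult iota_Fq)
  hence "ev ((iota a * z + iota b) / iota d) \<in> Vcomb" using ev_Ecomb Ecomb_Vcomb by blast
  thus ?thesis using act_Iw(1)[OF gI z] ge V.subspace_scale[OF Vcomb_sub] by simp
qed

lemma Kst_Vcomb: "Kst Vcomb"
proof -
  have I: "\<rho> g y \<in> Vcomb" if g: "g \<in> Iwahori val" and y: "y \<in> Vcomb" for g y
  proof (rule lin_closed[OF Iw_GL2[OF g] _ _ y])
    show "\<And>z. z \<in> Fq \<Longrightarrow> \<rho> g (ev z) \<in> Vcomb" using Iw_ev_Vcomb g by blast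
    obtain a b c d where ge: "g = mat2 a b c d" using mat2_eta by blast
    show "\<rho> g einf \<in> Vcomb" using act_inf(1)[of a b c d] g ge V.subspace_scale[OF Vcomb_sub] einf_Vcomb by simp
  qed
  have S: "\<rho> sm y \<in> Vcomb" if y: "y \<in> Vcomb" for y
  proof (rule lin_closed[OF sm_GL2 _ _ y])
    show "\<rho> sm einf \<in> Vcomb" using s_einf ev_Ecomb Ecomb_Vcomb by auto
    fix z assume z: "z \<in> Fq"
    show "\<rho> sm (ev z) \<in> Vcomb"
    proof (cases "z = 0")
      case True thus ?thesis using s_ev0 einf_Vcomb by simp
    next
      case False
      have "ev (1 / z) \<in> Vcomb" using ev_Ecomb Ecomb_Vcomb Fq_divide[OF Fq_one z] by blast
      thus ?thesis using s_ev(1)[OF z False] V.subspace_scale[OF Vcomb_sub] by simp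
    qed
  qed
  show ?thesis unfolding Kst_def using K_closure[of Vcomb] I S by blast
qed

lemma Vcomb_span: "Vcomb \<subseteq> V.span (insert einf (ev ` Fq))"
proof
  fix y assume "y \<in> Vcomb"
  then obtain a b where y: "y = (\<Sum>z\<in>Fq. sc (a z) (ev z)) + sc b einf" by (auto simp: Vcomb_def)
  show "y \<in> V.span (insert einf (ev ` Fq))" unfolding y
    by (intro V.span_add V.span_sum V.span_scale V.span_base) auto
qed

lemma tv_Ecomb: "tv \<in> Ecomb" using ev_Ecomb[of 0] ev0 by simp

definition hs :: "'k \<Rightarrow> 'f^2^2" where "hs z = mat2 (- 1 / L z) 0 pi (L z)"

lemma s_sum: "\<rho> sm (\<Sum>z\<in>Fq. sc (a z) (ev z)) = sc (a 0) einf + (\<Sum>z\<in>Fq - {0}. sc (a z * chr (hs z)) (ev (1 / z)))"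
proof -
  have "\<rho> sm (\<Sum>z\<in>Fq. sc (a z) (ev z)) = (\<Sum>z\<in>Fq. sc (a z) (\<rho> sm (ev z)))"
    by (simp add: rho_sum rho_scale sm_GL2)
  also have "\<dots> = sc (a 0) (\<rho> sm (ev 0)) + (\<Sum>z\<in>Fq - {0}. sc (a z) (\<rho> sm (ev z)))"
    by (rule sum.remove) (simp_all add: finite_Fq)
  also have "(\<Sum>z\<in>Fq - {0}. sc (a z) (\<rho> sm (ev z))) = (\<Sum>z\<in>Fq - {0}. sc (a z * chr (hs z)) (ev (1 / z)))"
    by (rule sum.cong) (auto simp: s_ev(1) hs_def)
  finally show ?thesis by (simp add: s_ev0)
qed

lemma s_sum_E: "(\<Sum>z\<in>Fq - {0}. sc (c z) (ev (1 / z))) \<in> Ecomb"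
  using finite_Fq by (intro Ecomb_in) (auto intro: Fq_divide)

end

context RP
begin

definition X1 :: "'f \<Rightarrow> 'k" where "X1 a = chr (mat2 a 0 0 1)"
definition X2 :: "'f \<Rightarrow> 'k" where "X2 a = chr (mat2 1 0 0 a)"

lemma diag_Iw: "a \<in> Ov \<Longrightarrow> a \<notin> Pv \<Longrightarrow> d \<in> Ov \<Longrightarrow> d \<notin> Pv \<Longrightarrow> mat2 a 0 0 d \<in> Iwahori val"
  by (rule Iw_intro) auto

lemma X1_mult: "a \<in> Ov \<Longrightarrow> a \<notin> Pv \<Longrightarrow> b \<in> Ov \<Longrightarrow> b \<notin> Pv \<Longrightarrow> X1 (a * b) = X1 a * X1 b"
  unfolding X1_def using chr_mult[OF diag_Iw[of a 1] diag_Iw[of b 1]] by (simp add: mat2_mult)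

lemma X2_mult: "a \<in> Ov \<Longrightarrow> a \<notin> Pv \<Longrightarrow> b \<in> Ov \<Longrightarrow> b \<notin> Pv \<Longrightarrow> X2 (a * b) = X2 a * X2 b"
  unfolding X2_def using chr_mult[OF diag_Iw[of 1 a] diag_Iw[of 1 b]] by (simp add: mat2_mult)

lemma chr_Iw_formula:
  assumes h: "mat2 a b c d \<in> Iwahori val"
  shows "chr (mat2 a b c d) = X1 a * X2 ((a * d - b * c) / a)"
proof -
  have u: "a \<in> Ov" "a \<notin> Pv" "d \<in> Ov" "d \<notin> Pv" using Iw_units[OF h] by auto
  have e: "b \<in> Ov" "c \<in> Pv" "a * d - b * c \<notin> Pv" using h by (auto simp: Iw_iff KK_iff)
  have a0: "a \<noteq> 0" using unit_nz u by blast
  have ia: "inverse a \<in> Ov" "inverse a \<notin> Pv" using unit_inv u by auto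
  have D: "a * d - b * c \<in> Ov" using u e P_O by (auto intro: O_diff O_mult)
  have Da: "(a * d - b * c) / a \<in> Ov" "(a * d - b * c) / a \<notin> Pv"
    using unit_mult[OF D e(3) ia] by (auto simp: divide_inverse)
  have l: "mat2 1 0 (c / a) 1 \<in> Iwahori1 val"
    by (rule Iw1_intro) (auto simp: divide_inverse intro: P_multR[OF e(2) ia(1)])
  have m: "um (b / a) \<in> Iwahori1 val" using um_Iw1 unit_div[OF e(1) u(1,2)] by blast
  have d1: "mat2 a 0 0 1 \<in> Iwahori val" using diag_Iw u by simp
  have d2: "mat2 1 0 0 ((a * d - b * c) / a) \<in> Iwahori val" using diag_Iw Da by simp
  have lI: "mat2 1 0 (c / a) 1 \<in> Iwahori val" using Iw1_Iw l by blast
  have mI: "um (b / a) \<in> Iwahori val" using Iw1_Iw m by blast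
  have "chr (mat2 a b c d) = chr (mat2 1 0 (c / a) 1 ** mat2 a 0 0 1 ** mat2 1 0 0 ((a * d - b * c) / a) ** um (b / a))"
    using mat_M9[OF a0, of b c d] by simp
  also have "\<dots> = chr (mat2 1 0 (c / a) 1) * chr (mat2 a 0 0 1) * chr (mat2 1 0 0 ((a * d - b * c) / a)) * chr (um (b / a))"
    using lI d1 d2 mI by (simp add: chr_mult Iw_mult)
  also have "\<dots> = X1 a * X2 ((a * d - b * c) / a)"
    using chr_I1[OF l] chr_I1[OF m] by (simp add: X1_def X2_def)
  finally show ?thesis .
qed

lemma X_res:
  assumes a: "a \<in> Ov" "a \<notin> Pv"
  shows "X1 a = X1 (L (iota a))" "X2 a = X2 (L (iota a))"
proof -
  have ia: "iota a \<in> Fq" "iota a \<noteq> 0" using iota_Fq iota_zero_iff a by auto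
  define a0 where "a0 = L (iota a)"
  have u0: "a0 \<in> Ov" "a0 \<notin> Pv" using L_O L_unit ia a0_def by auto
  have i0: "iota a0 = iota a" using ia a0_def by simp
  define r where "r = a / a0"
  have r: "r \<in> Ov" using unit_div a u0 r_def by blast
  have ir: "iota r = 1" using iota_div[OF a(1) u0] ia i0 r_def by simp
  have r1: "r - 1 \<in> Pv" using iota_eq[OF r O_one] ir by simp
  have ru: "r \<notin> Pv" using P_unit_diff[OF r r1] .
  have ar: "a = a0 * r" using unit_nz[OF u0] r_def by simp
  have "X1 r = 1" unfolding X1_def by (rule chr_I1, rule Iw1_intro) (auto simp: r1)
  moreover have "X2 r = 1" unfolding X2_def by (rule chr_I1, rule Iw1_intro) (auto simp: r1)
  ultimately show "X1 a = X1 (L (iota a))" "X2 a = X2 (L (iota a))"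
    using X1_mult[OF u0 r ru] X2_mult[OF u0 r ru] ar unfolding a0_def[symmetric] by simp_all
qed

lemma X1_one: "X1 1 = 1" unfolding X1_def by (rule chr_I1, rule Iw1_intro) auto

definition eps :: 'k where "eps = X1 (- 1)"

lemma eps2: "eps * eps = 1"
  using X1_mult[of "-1" "-1"] X1_one m1_notP O_uminus[OF O_one] by (simp add: eps_def)

lemma eps_nz: "eps \<noteq> 0" using eps2 by auto

context
  assumes split: "\<And>m. m \<in> Fq \<Longrightarrow> m \<noteq> 0 \<Longrightarrow> X1 (L m) = X2 (L m)"
begin

lemma X12: "a \<in> Ov \<Longrightarrow> a \<notin> Pv \<Longrightarrow> X1 a = X2 a"
  using X_res[of a] split[of "iota a"] iota_Fq iota_zero_iff by auto

lemma chr_det: "h \<in> Iwahori val \<Longrightarrow> chr h = X1 (det h)"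
proof -
  assume h: "h \<in> Iwahori val"
  obtain a b c d where he: "h = mat2 a b c d" using mat2_eta by blast
  have hI: "mat2 a b c d \<in> Iwahori val" using h he by simp
  have u: "a \<in> Ov" "a \<notin> Pv" using Iw_units[OF hI] by auto
  have e: "b \<in> Ov" "c \<in> Pv" "d \<in> Ov" "a * d - b * c \<notin> Pv" using hI by (auto simp: Iw_iff KK_iff)
  have D: "a * d - b * c \<in> Ov" using u e P_O by (auto intro: O_diff O_mult)
  have ia: "inverse a \<in> Ov" "inverse a \<notin> Pv" using unit_inv u by auto
  have Da: "(a * d - b * c) / a \<in> Ov" "(a * d - b * c) / a \<notin> Pv"
    using unit_mult[OF D e(4) ia] by (auto simp: divide_inverse)
  have "chr h = X1 a * X1 ((a * d - b * c) / a)" using chr_Iw_formula[OF hI] X12[OF Da] he by simp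
  also have "\<dots> = X1 (a * ((a * d - b * c) / a))" using X1_mult[OF u Da] by simp
  also have "a * ((a * d - b * c) / a) = a * d - b * c" using unit_nz[OF u] by simp
  finally show ?thesis using he by (simp add: mat2_det)
qed

lemma s_ev_split: "z \<in> Fq \<Longrightarrow> z \<noteq> 0 \<Longrightarrow> \<rho> sm (ev z) = sc eps (ev (1 / z))"
  using s_ev[of z] chr_det eps_def by simp

lemma Iw_ev_split:
  assumes g: "mat2 a b c d \<in> Iwahori val" and z: "z \<in> Fq"
  shows "\<rho> (mat2 a b c d) (ev z) = sc (X1 (a * d - b * c)) (ev ((iota a * z + iota b) / iota d))"
  using act_Iw[OF g z] chr_det by simp

lemma Iw_einf_split:
  assumes g: "mat2 a b c d \<in> Iwahori val"
  shows "\<rho> (mat2 a b c d) einf = sc (X1 (a * d - b * c)) einf"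
  using act_inf[OF g] chr_det by simp

end

end

context RP
begin

definition gen :: "'v \<Rightarrow> 'v set" where "gen x = V.span {\<rho> g x | g. g \<in> KK val}"

lemma Kst_gen: "Kst (gen x)"
  unfolding Kst_def
proof (intro ballI)
  fix g y assume g: "g \<in> KK val" and y: "y \<in> gen x"
  have G: "g \<in> GL2" using KK_GL2 g by blast
  from y[unfolded gen_def] show "\<rho> g y \<in> gen x"
  proof (induction rule: V.span_induct_alt)
    case base thus ?case by (simp add: rho_zero G gen_def V.span_zero)
  next
    case (step c z y)
    then obtain h where h: "h \<in> KK val" "z = \<rho> h x" by blast
    have "\<rho> g z = \<rho> (g ** h) x" using h G KK_GL2 by (simp add: rho_mult)
    moreover have "g ** h \<in> KK val" using KK_mult g h by blast
    ultimately have "\<rho> g z \<in> gen x" unfolding gen_def by (blast intro: V.span_base)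
    thus ?case using step by (simp add: rho_add rho_scale G gen_def V.span_add V.span_scale)
  qed
qed

lemma gen_sub: "V.subspace (gen x)" by (simp add: gen_def)

lemma gen_self: "x \<in> gen x"
proof -
  have "\<rho> (mat 1) x = x" by (rule rho_one)
  moreover have "(mat 1 :: 'f^2^2) \<in> KK val" by (simp add: mat1_mat2 KK_iff)
  ultimately show ?thesis unfolding gen_def by (metis (mono_tags, lifting) V.span_base mem_Collect_eq)
qed

lemma gen_min: "Kst U \<Longrightarrow> V.subspace U \<Longrightarrow> x \<in> U \<Longrightarrow> gen x \<subseteq> U"
  unfolding gen_def Kst_def by (rule V.span_minimal) auto

lemma gen_zero: "gen 0 = {0}"
proof -
  have "{\<rho> g 0 | g. g \<in> KK val} \<subseteq> {0}" using rho_zero KK_GL2 by auto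
  hence "gen 0 \<subseteq> V.span {0}" unfolding gen_def by (rule V.span_mono)
  thus ?thesis using gen_self[of 0] by (auto simp: V.span_singleton)
qed

lemma A_zero: "A m 0 = 0" by (simp add: A_def tau_lin)
lemma A_sum: "A m (sum f S) = (\<Sum>i\<in>S. A m (f i))"
  by (induction S rule: infinite_finite_induct) (simp_all add: A_add A_zero)

lemma pq1: "\<mu> \<in> Fq \<Longrightarrow> (\<Sum>z\<in>Fq. sc ((z - \<mu>) ^ (q - 1)) (ev z)) = w 0 - ev \<mu>"
proof -
  assume m: "\<mu> \<in> Fq"
  have q2: "2 \<le> q" using q_ge2 .
  have "(\<Sum>z\<in>Fq. sc ((z - \<mu>) ^ (q - 1)) (ev z)) = sc ((\<mu> - \<mu>) ^ (q - 1)) (ev \<mu>) + (\<Sum>z\<in>Fq - {\<mu>}. sc ((z - \<mu>) ^ (q - 1)) (ev z))"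
    by (rule sum.remove) (simp_all add: finite_Fq m)
  also have "sc ((\<mu> - \<mu>) ^ (q - 1)) (ev \<mu>) = 0" using q2 by simp
  also have "(\<Sum>z\<in>Fq - {\<mu>}. sc ((z - \<mu>) ^ (q - 1)) (ev z)) = (\<Sum>z\<in>Fq - {\<mu>}. ev z)"
  proof (rule sum.cong)
    fix z assume z: "z \<in> Fq - {\<mu>}"
    hence "(z - \<mu>) ^ (q - 1) = 1" using fermat[of "z - \<mu>"] Fq_diff[of z \<mu>] m by simp
    thus "sc ((z - \<mu>) ^ (q - 1)) (ev z) = ev z" by simp
  qed simp
  also have "(\<Sum>z\<in>Fq - {\<mu>}. ev z) = w 0 - ev \<mu>"
    using sum.remove[of Fq \<mu> ev] finite_Fq m by (simp add: w0_sum)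
  finally show ?thesis by simp
qed

lemma A_ev: "z \<in> Fq \<Longrightarrow> A (q - 1) (ev z) = w 0 - ev z"
proof -
  assume z: "z \<in> Fq"
  have "A (q - 1) (ev z) = (\<Sum>\<xi>\<in>Fq. sc (\<xi> ^ (q - 1)) (ev (\<xi> + z)))"
    by (simp add: A_def tau_ev z add.commute)
  also have "\<dots> = (\<Sum>\<zeta>\<in>Fq. sc ((\<zeta> - z) ^ (q - 1)) (ev \<zeta>))"
    using sum_shift[OF z, of "\<lambda>\<zeta>. sc ((\<zeta> - z) ^ (q - 1)) (ev \<zeta>)"] by simp
  finally show ?thesis using pq1[OF z] by simp
qed

lemma A_einf: "A (q - 1) einf = - einf"
proof -
  have "A (q - 1) einf = sc (\<Sum>\<xi>\<in>Fq. \<xi> ^ (q - 1)) einf"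
    by (simp add: A_def tau_einf V.scale_sum_left)
  also have "(\<Sum>\<xi>\<in>Fq. \<xi> ^ (q - 1)) = -1" using psum[of "q - 1"] q_ge2 by simp
  finally show ?thesis by simp
qed

lemma tau_w0: "\<xi> \<in> Fq \<Longrightarrow> tau \<xi> (w 0) = w 0" using tau_w[of \<xi> 0] by simp

lemma inv_bij: "bij_betw (\<lambda>z. 1 / z) (Fq - {0}) (Fq - {0})"
proof (rule bij_betw_imageI)
  show "inj_on (\<lambda>z. 1 / z) (Fq - {0})" by (auto simp: inj_on_def)
  show "(\<lambda>z. 1 / z) ` (Fq - {0}) = Fq - {0}"
  proof
    show "(\<lambda>z. 1 / z) ` (Fq - {0}) \<subseteq> Fq - {0}" using Fq_divide[OF Fq_one] by auto
    show "Fq - {0} \<subseteq> (\<lambda>z. 1 / z) ` (Fq - {0})"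
    proof
      fix z assume z: "z \<in> Fq - {0}"
      hence "1 / z \<in> Fq - {0}" using Fq_divide[OF Fq_one] by auto
      moreover have "z = 1 / (1 / z)" by simp
      ultimately show "z \<in> (\<lambda>z. 1 / z) ` (Fq - {0})" by blast
    qed
  qed
qed

lemma sum_inv: "(\<Sum>z\<in>Fq - {0}. f z) = (\<Sum>z\<in>Fq - {0}. f (1 / z))"
  using sum.reindex_bij_betw[OF inv_bij, of f] by simp

lemma aff_bij: "\<alpha> \<in> Fq \<Longrightarrow> \<alpha> \<noteq> 0 \<Longrightarrow> \<beta> \<in> Fq \<Longrightarrow> bij_betw (\<lambda>z. \<alpha> * z + \<beta>) Fq Fq"
  using bij_betw_trans[OF scale_bij shift_bij, of \<alpha> \<beta>] by (simp add: comp_def)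

lemma sum_aff: "\<alpha> \<in> Fq \<Longrightarrow> \<alpha> \<noteq> 0 \<Longrightarrow> \<beta> \<in> Fq \<Longrightarrow> (\<Sum>z\<in>Fq. f z) = (\<Sum>z\<in>Fq. f (\<alpha> * z + \<beta>))"
  using sum.reindex_bij_betw[OF aff_bij, of \<alpha> \<beta> f] by simp

lemma sum_Fq_remove0: "(\<Sum>z\<in>Fq. f z) = f 0 + (\<Sum>z\<in>Fq - {0}. f z)"
  by (rule sum.remove) (simp_all add: finite_Fq)

context
  assumes split: "\<And>m. m \<in> Fq \<Longrightarrow> m \<noteq> 0 \<Longrightarrow> X1 (L m) = X2 (L m)"
begin

definition sa :: "('k \<Rightarrow> 'k) \<Rightarrow> 'k \<Rightarrow> 'k \<Rightarrow> 'k" where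
  "sa a b z = (if z = 0 then b else eps * a (1 / z))"

lemma s_rep: "\<rho> sm ((\<Sum>z\<in>Fq. sc (a z) (ev z)) + sc b einf) = (\<Sum>z\<in>Fq. sc (sa a b z) (ev z)) + sc (a 0) einf"
proof -
  have c: "z \<in> Fq - {0} \<Longrightarrow> chr (hs z) = eps" for z
    using s_ev(2,3)[of z] chr_det[OF split] by (simp add: hs_def eps_def)
  have "\<rho> sm ((\<Sum>z\<in>Fq. sc (a z) (ev z)) + sc b einf) = sc (a 0) einf + (\<Sum>z\<in>Fq - {0}. sc (a z * eps) (ev (1 / z))) + sc b (ev 0)"
    using s_sum[of a] c by (simp add: rho_add rho_scale sm_GL2 s_einf)
  also have "(\<Sum>z\<in>Fq - {0}. sc (a z * eps) (ev (1 / z))) = (\<Sum>z\<in>Fq - {0}. sc (eps * a (1 / z)) (ev z))"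
    using sum_inv[of "\<lambda>z. sc (a z * eps) (ev (1 / z))"] by (simp add: mult.commute)
  also have "\<dots> = (\<Sum>z\<in>Fq - {0}. sc (sa a b z) (ev z))" by (rule sum.cong) (auto simp: sa_def)
  also have "(\<Sum>z\<in>Fq. sc (sa a b z) (ev z)) = sc b (ev 0) + (\<Sum>z\<in>Fq - {0}. sc (sa a b z) (ev z))"
    by (subst sum_Fq_remove0) (simp add: sa_def)
  ultimately show ?thesis by (simp add: algebra_simps)
qed

lemma sum_sa: "(\<Sum>z\<in>Fq. sa a b z) = b + eps * ((\<Sum>z\<in>Fq. a z) - a 0)"
proof -
  have "(\<Sum>z\<in>Fq. sa a b z) = b + (\<Sum>z\<in>Fq - {0}. eps * a (1 / z))"
    by (subst sum_Fq_remove0) (simp add: sa_def)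
  also have "(\<Sum>z\<in>Fq - {0}. eps * a (1 / z)) = eps * (\<Sum>z\<in>Fq - {0}. a z)"
    using sum_inv[of a] by (simp add: sum_distrib_left)
  also have "(\<Sum>z\<in>Fq - {0}. a z) = (\<Sum>z\<in>Fq. a z) - a 0" using sum_Fq_remove0[of a] by simp
  finally show ?thesis .
qed

definition alpha :: "('k \<Rightarrow> 'k) \<Rightarrow> 'k \<Rightarrow> 'k" where "alpha a b = eps * (\<Sum>z\<in>Fq. a z) + b"

definition H :: "'v set" where
  "H = {y. \<exists>a b. y = (\<Sum>z\<in>Fq. sc (a z) (ev z)) + sc b einf \<and> alpha a b = 0}"

lemma H_intro: "y = (\<Sum>z\<in>Fq. sc (a z) (ev z)) + sc b einf \<Longrightarrow> alpha a b = 0 \<Longrightarrow> y \<in> H"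
  unfolding H_def by blast

lemma H_sub: "V.subspace H"
proof (unfold V.subspace_def, intro conjI ballI allI)
  show "0 \<in> H" unfolding H_def alpha_def by (intro CollectI exI[of _ "\<lambda>_. 0"] exI[of _ 0]) simp
next
  fix x y assume "x \<in> H" "y \<in> H"
  then obtain c1 c2 b1 b2 where x: "x = (\<Sum>k\<in>Fq. sc (c1 k) (ev k)) + sc b1 einf" "alpha c1 b1 = 0"
    and y: "y = (\<Sum>k\<in>Fq. sc (c2 k) (ev k)) + sc b2 einf" "alpha c2 b2 = 0" by (auto simp: H_def)
  have "x + y = (\<Sum>k\<in>Fq. sc (c1 k + c2 k) (ev k)) + sc (b1 + b2) einf"
    using x y by (simp add: sum.distrib V.scale_left_distrib)
  moreover have "alpha (\<lambda>k. c1 k + c2 k) (b1 + b2) = alpha c1 b1 + alpha c2 b2"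
    by (simp add: alpha_def sum.distrib algebra_simps)
  hence "alpha (\<lambda>k. c1 k + c2 k) (b1 + b2) = 0" using x y by simp
  ultimately show "x + y \<in> H" by (rule H_intro)
next
  fix c and x assume "x \<in> H"
  then obtain c1 b1 where x: "x = (\<Sum>k\<in>Fq. sc (c1 k) (ev k)) + sc b1 einf" "alpha c1 b1 = 0" by (auto simp: H_def)
  have "sc c x = (\<Sum>k\<in>Fq. sc (c * c1 k) (ev k)) + sc (c * b1) einf"
    using x by (simp add: V.scale_sum_right V.scale_right_distrib)
  moreover have "alpha (\<lambda>k. c * c1 k) (c * b1) = c * alpha c1 b1"
    by (simp add: alpha_def sum_distrib_left[symmetric] algebra_simps)
  hence "alpha (\<lambda>k. c * c1 k) (c * b1) = 0" using x by simp
  ultimately show "sc c x \<in> H" by (rule H_intro)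
qed

lemma w0_H: "w 0 \<in> H"
proof -
  have "w 0 = (\<Sum>z\<in>Fq. sc 1 (ev z)) + sc 0 einf" by (simp add: w0_sum)
  moreover have "alpha (\<lambda>_. 1) 0 = 0" using char_q card_Fq by (simp add: alpha_def)
  ultimately show ?thesis by (rule H_intro)
qed

lemma H_s: "y \<in> H \<Longrightarrow> \<rho> sm y \<in> H"
proof -
  assume "y \<in> H"
  then obtain a b where y: "y = (\<Sum>k\<in>Fq. sc (a k) (ev k)) + sc b einf" "alpha a b = 0" by (auto simp: H_def)
  have "\<rho> sm y = (\<Sum>z\<in>Fq. sc (sa a b z) (ev z)) + sc (a 0) einf" using s_rep y by simp
  moreover have "alpha (sa a b) (a 0) = eps * alpha a b"
    unfolding alpha_def sum_sa using eps2 by (simp add: algebra_simps)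
  ultimately show ?thesis using y by (intro H_intro) simp_all
qed

lemma H_Iw: "g \<in> Iwahori val \<Longrightarrow> y \<in> H \<Longrightarrow> \<rho> g y \<in> H"
proof -
  assume g: "g \<in> Iwahori val" and "y \<in> H"
  then obtain a0 b0 where y: "y = (\<Sum>k\<in>Fq. sc (a0 k) (ev k)) + sc b0 einf" "alpha a0 b0 = 0" by (auto simp: H_def)
  obtain a b c d where ge: "g = mat2 a b c d" using mat2_eta by blast
  have gI: "mat2 a b c d \<in> Iwahori val" using g ge by simp
  have u: "a \<in> Ov" "a \<notin> Pv" "d \<in> Ov" "d \<notin> Pv" using Iw_units[OF gI] by auto
  have bO: "b \<in> Ov" using gI by (auto simp: Iw_iff KK_iff)
  define al where "al = iota a / iota d"
  define be where "be = iota b / iota d"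
  have ial: "al \<in> Fq" "al \<noteq> 0" "be \<in> Fq"
    using u bO iota_zero_iff by (auto simp: al_def be_def intro!: Fq_divide iota_Fq)
  define \<kappa> where "\<kappa> = X1 (a * d - b * c)"
  have G: "g \<in> GL2" using Iw_GL2 g by blast
  have ev_act: "\<rho> g (ev z) = sc \<kappa> (ev (al * z + be))" if z: "z \<in> Fq" for z
    using Iw_ev_split[OF split gI z] ge by (simp add: \<kappa>_def al_def be_def add_divide_distrib)
  have ei: "\<rho> g einf = sc \<kappa> einf" using Iw_einf_split[OF split gI] ge by (simp add: \<kappa>_def)
  have "\<rho> g y = (\<Sum>z\<in>Fq. sc (a0 z) (\<rho> g (ev z))) + sc b0 (\<rho> g einf)"
    unfolding y(1) by (simp add: rho_add rho_sum rho_scale G)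
  also have "(\<Sum>z\<in>Fq. sc (a0 z) (\<rho> g (ev z))) = (\<Sum>z\<in>Fq. sc (\<kappa> * a0 z) (ev (al * z + be)))"
    by (rule sum.cong) (simp_all add: ev_act mult.commute)
  also have "(\<Sum>z\<in>Fq. sc (\<kappa> * a0 z) (ev (al * z + be))) = (\<Sum>z\<in>Fq. sc (\<kappa> * a0 ((z - be) / al)) (ev z))"
    using sum_aff[OF ial, of "\<lambda>z. sc (\<kappa> * a0 ((z - be) / al)) (ev z)"] ial by simp
  also have "sc b0 (\<rho> g einf) = sc (\<kappa> * b0) einf" using ei by (simp add: mult.commute)
  finally have e: "\<rho> g y = (\<Sum>z\<in>Fq. sc (\<kappa> * a0 ((z - be) / al)) (ev z)) + sc (\<kappa> * b0) einf" .
  have "(\<Sum>z\<in>Fq. a0 ((z - be) / al)) = (\<Sum>z\<in>Fq. a0 z)"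
    using sum_aff[OF ial, of "\<lambda>z. a0 ((z - be) / al)"] ial by simp
  hence "alpha (\<lambda>z. \<kappa> * a0 ((z - be) / al)) (\<kappa> * b0) = \<kappa> * alpha a0 b0"
    by (simp add: alpha_def sum_distrib_left[symmetric] algebra_simps)
  thus ?thesis using e y by (intro H_intro) simp_all
qed

lemma Kst_H: "Kst H"
  unfolding Kst_def using K_closure[of H] H_Iw H_s by blast

lemma gen_w0_H: "gen (w 0) \<subseteq> H" using gen_min[OF Kst_H H_sub w0_H] .

context
  assumes w0nz: "w 0 \<noteq> 0" and unz: "sc eps (w 0) + einf \<noteq> 0"
begin

lemma relA: "(\<Sum>z\<in>Fq. sc (a z) (ev z)) + sc b einf = 0 \<Longrightarrow> (\<Sum>z\<in>Fq. a z) = 0"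
proof -
  assume r: "(\<Sum>z\<in>Fq. sc (a z) (ev z)) + sc b einf = 0"
  have "0 = A (q - 1) ((\<Sum>z\<in>Fq. sc (a z) (ev z)) + sc b einf)" using r A_zero by simp
  also have "\<dots> = (\<Sum>z\<in>Fq. sc (a z) (A (q - 1) (ev z))) + sc b (A (q - 1) einf)"
    by (simp only: A_add A_sum A_scale)
  also have "(\<Sum>z\<in>Fq. sc (a z) (A (q - 1) (ev z))) = (\<Sum>z\<in>Fq. sc (a z) (w 0 - ev z))"
    by (rule sum.cong) (simp_all only: A_ev)
  also have "sc b (A (q - 1) einf) = - sc b einf" by (simp only: A_einf V.scale_minus_right)
  also have "(\<Sum>z\<in>Fq. sc (a z) (w 0 - ev z)) + - sc b einf = (\<Sum>z\<in>Fq. sc (a z) (w 0 - ev z)) - sc b einf"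
    by simp
  also have "\<dots> = sc (\<Sum>z\<in>Fq. a z) (w 0) - ((\<Sum>z\<in>Fq. sc (a z) (ev z)) + sc b einf)"
    by (simp add: V.scale_right_diff_distrib sum_subtractf V.scale_sum_left)
  finally have "sc (\<Sum>z\<in>Fq. a z) (w 0) = 0" using r by simp
  thus ?thesis using w0nz by simp
qed

lemma relS: "(\<Sum>z\<in>Fq. sc (a z) (ev z)) + sc b einf = 0 \<Longrightarrow> b = eps * a 0"
proof -
  assume r: "(\<Sum>z\<in>Fq. sc (a z) (ev z)) + sc b einf = 0"
  have s0: "(\<Sum>z\<in>Fq. a z) = 0" using relA[OF r] .
  have "(\<Sum>z\<in>Fq. sc (sa a b z) (ev z)) + sc (a 0) einf = 0"
    using s_rep[of a b] r rho_zero[OF sm_GL2] by simp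
  from relA[OF this] have "b + eps * ((\<Sum>z\<in>Fq. a z) - a 0) = 0" using sum_sa by simp
  thus ?thesis using s0 by (simp add: algebra_simps)
qed

lemma rel: "(\<Sum>z\<in>Fq. sc (a z) (ev z)) + sc b einf = 0 \<Longrightarrow> alpha a b = 0"
proof -
  assume r: "(\<Sum>z\<in>Fq. sc (a z) (ev z)) + sc b einf = 0"
  have az: "a z = eps * b" if z: "z \<in> Fq" for z
  proof -
    have mz: "- z \<in> Fq" using Fq_uminus z by blast
    have "tau (- z) ((\<Sum>z\<in>Fq. sc (a z) (ev z)) + sc b einf) = 0" using r tau_lin by simp
    moreover have "tau (- z) ((\<Sum>z\<in>Fq. sc (a z) (ev z)) + sc b einf) = (\<Sum>u\<in>Fq. sc (a (u - - z)) (ev u)) + sc b einf"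
      by (simp only: tau_lin(1,2) sum_ev_shift[OF mz] tau_einf[OF mz])
    ultimately have "(\<Sum>u\<in>Fq. sc (a (u - - z)) (ev u)) + sc b einf = 0" by simp
    from relS[OF this] have "b = eps * a z" by simp
    hence "eps * b = eps * eps * a z" by simp
    thus ?thesis using eps2 by simp
  qed
  have "(\<Sum>z\<in>Fq. sc (a z) (ev z)) = (\<Sum>z\<in>Fq. sc (eps * b) (ev z))" by (rule sum.cong) (auto simp: az)
  also have "\<dots> = sc b (sc eps (w 0))" by (simp add: w0_sum V.scale_sum_right mult.commute)
  finally have "sc b (sc eps (w 0) + einf) = 0" using r by (simp add: V.scale_right_distrib)
  hence b0: "b = 0" using unz by simp
  hence "\<And>z. z \<in> Fq \<Longrightarrow> a z = 0" using az by simp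
  thus ?thesis using b0 by (simp add: alpha_def)
qed

lemma not_in_H: "sc eps (w 0) + einf \<notin> H"
proof
  assume "sc eps (w 0) + einf \<in> H"
  then obtain a b where ab: "sc eps (w 0) + einf = (\<Sum>z\<in>Fq. sc (a z) (ev z)) + sc b einf" "alpha a b = 0"
    by (auto simp: H_def)
  have "(\<Sum>z\<in>Fq. sc (a z - eps) (ev z)) + sc (b - 1) einf
      = ((\<Sum>z\<in>Fq. sc (a z) (ev z)) + sc b einf) - (sc eps (w 0) + einf)"
    by (simp add: w0_sum V.scale_left_diff_distrib sum_subtractf V.scale_sum_right algebra_simps)
  also have "\<dots> = 0" using ab by simp
  finally have "alpha (\<lambda>z. a z - eps) (b - 1) = 0" by (rule rel)
  moreover have "alpha (\<lambda>z. a z - eps) (b - 1) = alpha a b - eps * eps * of_nat q - 1"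
    using card_Fq by (simp add: alpha_def sum_subtractf algebra_simps)
  ultimately show False using ab char_q by simp
qed

end
end

end

context RP
begin

lemma line_false:
  assumes K: "Kst U" and S: "V.subspace U" and sub: "U \<subseteq> Vcomb"
    and disj: "\<And>y. y \<in> U \<Longrightarrow> y \<in> Ecomb \<Longrightarrow> y = 0"
    and u'U: "u' \<in> U" and u'0: "u' \<noteq> 0"
    and g: "w 0 \<noteq> 0 \<Longrightarrow> U \<subseteq> gen (w 0)"
  shows False
proof -
  have ES: "V.subspace Ecomb" by (rule Ecomb_sub)
  obtain e b where e: "e \<in> Ecomb" "u' = e + sc b einf" using Vcomb_cases sub u'U by blast
  have einfE: "einf \<notin> Ecomb"
  proof
    assume "einf \<in> Ecomb"
    hence "u' \<in> Ecomb" using e V.subspace_add[OF ES] V.subspace_scale[OF ES] by simp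
    thus False using disj u'U u'0 by blast
  qed
  have b0: "b \<noteq> 0"
  proof
    assume "b = 0" hence "u' \<in> Ecomb" using e by simp
    thus False using disj u'U u'0 by blast
  qed
  define y where "y = sc (1 / b) e"
  define u where "u = sc (1 / b) u'"
  have yE: "y \<in> Ecomb" using V.subspace_scale[OF ES e(1)] y_def by simp
  have uy: "u = y + einf" using e b0 by (simp add: u_def y_def V.scale_right_distrib)
  have uU: "u \<in> U" using V.subspace_scale[OF S u'U] u_def by simp
  have u0: "u \<noteq> 0" using u'0 b0 u_def by simp
  have ext: "X = sc \<beta> u" if X: "X \<in> U" "Y \<in> Ecomb" "X = Y + sc \<beta> einf" for X Y \<beta>
  proof -
    have eq: "X - sc \<beta> u = Y - sc \<beta> y" using X uy by (simp add: V.scale_right_distrib)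
    have inE: "Y - sc \<beta> y \<in> Ecomb" using V.subspace_diff[OF ES X(2) V.subspace_scale[OF ES yE]] .
    have "X - sc \<beta> u \<in> U" using V.subspace_diff[OF S X(1) V.subspace_scale[OF S uU]] .
    hence inU: "Y - sc \<beta> y \<in> U" using eq by simp
    have "Y - sc \<beta> y = 0" using disj[OF inU inE] .
    hence "X - sc \<beta> u = 0" using eq by simp
    thus ?thesis by simp
  qed
  obtain a where ya: "y = (\<Sum>z\<in>Fq. sc (a z) (ev z))" using yE by (auto simp: Ecomb_def)
  have srep: "\<rho> sm u = sc (a' 0) u" if a': "y = (\<Sum>z\<in>Fq. sc (a' z) (ev z))" for a'
  proof -
    have "\<rho> sm u = (\<Sum>z\<in>Fq - {0}. sc (a' z * chr (hs z)) (ev (1 / z))) + ev 0 + sc (a' 0) einf"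
      using uy a' s_sum[of a'] by (simp add: rho_add sm_GL2 s_einf algebra_simps)
    moreover have "(\<Sum>z\<in>Fq - {0}. sc (a' z * chr (hs z)) (ev (1 / z))) + ev 0 \<in> Ecomb"
      using V.subspace_add[OF ES s_sum_E ev_Ecomb[OF Fq_zero]] .
    moreover have "\<rho> sm u \<in> U" using K uU sm_KK by (auto simp: Kst_def)
    ultimately show ?thesis using ext by blast
  qed
  have tinv: "tau \<xi> y = y" if x: "\<xi> \<in> Fq" for \<xi>
  proof -
    have ty: "tau \<xi> y \<in> Ecomb" unfolding ya sum_ev_shift[OF x] Ecomb_def
      by (intro CollectI exI[of _ "\<lambda>z. a (z - \<xi>)"] refl)
    have "tau \<xi> u = tau \<xi> y + sc 1 einf" using uy tau_einf[OF x] by (simp add: tau_lin)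
    moreover have "tau \<xi> u \<in> U" using Kst_tau[OF K x uU] .
    ultimately have "tau \<xi> u = sc 1 u" using ext ty by blast
    thus ?thesis using uy tau_einf[OF x] by (simp add: tau_lin)
  qed
  have aconst: "a z = a 0" if z: "z \<in> Fq" for z
  proof -
    have mz: "- z \<in> Fq" using Fq_uminus z by blast
    have "y = (\<Sum>u\<in>Fq. sc (a (u - - z)) (ev u))" using tinv[OF mz] sum_ev_shift[OF mz, of a] ya by simp
    hence "\<rho> sm u = sc (a z) u" using srep[of "\<lambda>u. a (u - - z)"] by simp
    moreover have "\<rho> sm u = sc (a 0) u" using srep[OF ya] .
    ultimately have "sc (a z) u = sc (a 0) u" by metis
    thus ?thesis using u0 V.scale_cancel_right by blast
  qed
  define c where "c = a 0"
  have ac: "sc (a z) (ev z) = sc c (ev z)" if z: "z \<in> Fq" for z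
  proof -
    have "a z = c" using aconst[OF z] c_def by blast
    thus ?thesis by simp
  qed
  have yc: "y = sc c (w 0)" unfolding ya w0_sum V.scale_sum_right
    by (rule sum.cong[OF refl]) (rule ac)
  have su: "\<rho> sm u = sc c u" using srep[OF ya] c_def by simp
  have smw: "\<rho> sm u = sc c (\<rho> sm (w 0)) + tv"
    using uy yc by (simp add: rho_add rho_scale sm_GL2 s_einf ev0)
  have c0: "c \<noteq> 0"
  proof
    assume "c = 0"
    hence "\<rho> sm u = tv" using smw by simp
    thus False using su \<open>c = 0\<close> tv_nz by simp
  qed
  have w0: "w 0 \<noteq> 0"
  proof
    assume "w 0 = 0"
    hence "sc c einf = tv" using su smw uy yc by (simp add: rho_zero sm_GL2)
    hence "einf = sc (1 / c) tv" using c0 by (metis V.scale_one V.scale_scale divide_self_if mult.commute times_divide_eq_left mult_1)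
    thus False using einfE V.subspace_scale[OF ES tv_Ecomb] by simp
  qed
  have split: "X1 (L m) = X2 (L m)" if m: "m \<in> Fq" "m \<noteq> 0" for m
  proof -
    have dI: "mat2 (L m) 0 0 1 \<in> Iwahori val" using dmat_Iw[OF m] by (simp add: dmat_def)
    have dG: "dmat m \<in> GL2" using dmat_Iw[OF m] Iw_GL2 by blast
    have ie: "\<rho> (dmat m) einf = sc (X2 (L m)) einf"
      using act_inf(1)[OF dI] by (simp add: dmat_def X2_def)
    have iw: "\<rho> (dmat m) (w 0) = sc (X1 (L m)) (w 0)" using dm_w[OF m, of 0] by (simp add: X1_def dmat_def)
    have "\<rho> (dmat m) u = sc (c * X1 (L m)) (w 0) + sc (X2 (L m)) einf"
      using uy yc ie iw by (simp add: rho_add rho_scale dG)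
    moreover have "\<rho> (dmat m) u \<in> U" using K uU dmat_Iw[OF m] Iw_KK by (auto simp: Kst_def)
    moreover have "sc (c * X1 (L m)) (w 0) \<in> Ecomb" using V.subspace_scale[OF ES w_Ecomb] .
    ultimately have "\<rho> (dmat m) u = sc (X2 (L m)) u" using ext by blast
    hence "sc (c * X1 (L m)) (w 0) + sc (X2 (L m)) einf = sc (X2 (L m)) (sc c (w 0) + einf)"
      using uy yc ie iw \<open>\<rho> (dmat m) u = sc (c * X1 (L m)) (w 0) + sc (X2 (L m)) einf\<close> by simp
    hence "sc (c * X1 (L m)) (w 0) = sc (X2 (L m) * c) (w 0)" by (simp add: V.scale_right_distrib)
    hence "c * X1 (L m) = X2 (L m) * c" using w0 by simp
    thus ?thesis using c0 by (simp add: mult.commute)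
  qed
  have smw0: "\<rho> sm (w 0) = sc eps (w 0 - ev 0) + einf"
  proof -
    have r: "\<rho> sm ((\<Sum>z\<in>Fq. sc ((\<lambda>_::'k. 1::'k) z) (ev z)) + sc 0 einf) = (\<Sum>z\<in>Fq. sc (sa (\<lambda>_. 1) 0 z) (ev z)) + sc ((\<lambda>_::'k. 1::'k) 0) einf"
      by (rule s_rep[OF split])
    have "\<rho> sm (w 0) = (\<Sum>z\<in>Fq. sc (sa (\<lambda>_. 1) 0 z) (ev z)) + sc 1 einf" using r by (simp add: w0_sum)
    also have "(\<Sum>z\<in>Fq. sc (sa (\<lambda>_. 1) 0 z) (ev z)) = sc eps (\<Sum>z\<in>Fq - {0}. ev z)"
      by (subst sum_Fq_remove0) (simp add: sa_def[OF split] V.scale_sum_right)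
    also have "(\<Sum>z\<in>Fq - {0}. ev z) = w 0 - ev 0" using sum_Fq_remove0[of ev] by (simp add: w0_sum)
    finally show ?thesis by simp
  qed
  have E1: "sc (c * eps) (w 0 - ev 0) + ev 0 = sc (c * c) (w 0)"
    using su smw smw0 uy yc ev0 by (simp add: V.scale_right_distrib)
  have ceps: "c * eps = 1"
  proof (rule ccontr)
    assume ne: "c * eps \<noteq> 1"
    have evc: "ev \<xi> = ev 0" if x: "\<xi> \<in> Fq" for \<xi>
    proof -
      have "tau \<xi> (sc (c * eps) (w 0 - ev 0) + ev 0) = tau \<xi> (sc (c * c) (w 0))" using E1 by simp
      hence E2: "sc (c * eps) (w 0 - ev \<xi>) + ev \<xi> = sc (c * c) (w 0)"
        by (simp add: tau_lin tau_w0 x tau_ev)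
      have d0: "(sc (c * eps) (w 0 - ev 0) + ev 0) - (sc (c * eps) (w 0 - ev \<xi>) + ev \<xi>) = 0"
        using E1 E2 by simp
      have "sc (c * eps - 1) (ev \<xi> - ev 0) = ((sc (c * eps) (w 0 - ev 0) + ev 0) - (sc (c * eps) (w 0 - ev \<xi>) + ev \<xi>))"
        by (simp add: algebra_simps V.scale_left_diff_distrib V.scale_right_diff_distrib)
      hence "sc (c * eps - 1) (ev \<xi> - ev 0) = 0" using d0 by simp
      thus ?thesis using ne by simp
    qed
    have "w 0 = (\<Sum>z\<in>Fq. ev 0)" unfolding w0_sum by (rule sum.cong[OF refl]) (rule evc)
    also have "\<dots> = sc (of_nat q) (ev 0)" using card_Fq by (simp add: V.sum_constant_scale)
    finally show False using w0 char_q by simp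
  qed
  have "c = c * (eps * eps)" using eps2 by simp
  also have "\<dots> = (c * eps) * eps" by (simp only: mult.assoc)
  also have "\<dots> = eps" using ceps by simp
  finally have ce: "c = eps" .
  have uH: "u \<in> H" using g[OF w0] uU gen_w0_H[OF split] by blast
  moreover have "u = sc eps (w 0) + einf" using uy yc ce by simp
  ultimately show False using not_in_H[OF split w0] u0 by simp
qed

lemma dim_eq:
  assumes S1: "V.subspace U1" and S0: "V.subspace U0" and sub: "U1 \<subseteq> U0"
    and fin: "U0 \<subseteq> V.span W" "finite W" and d: "V.dim U0 \<le> V.dim U1"
  shows "U1 = U0"
proof (rule ccontr)
  assume ne: "U1 \<noteq> U0"
  then obtain x where x: "x \<in> U0" "x \<notin> U1" using sub by blast
  obtain B where B: "B \<subseteq> U1" "V.independent B" "U1 \<subseteq> V.span B" "card B = V.dim U1" using V.basis_exists by blast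
  obtain B0 where B0: "B0 \<subseteq> U0" "V.independent B0" "U0 \<subseteq> V.span B0" "card B0 = V.dim U0" using V.basis_exists by blast
  have fB0: "finite B0" using V.independent_span_bound[OF fin(2) B0(2)] B0(1) fin(1) by blast
  have spB: "V.span B \<subseteq> U1" using V.span_minimal[OF B(1) S1] .
  have xB: "x \<notin> V.span B" using x spB by blast
  have ind: "V.independent (insert x B)" using V.independent_insertI[OF xB B(2)] .
  have "insert x B \<subseteq> V.span B0" using B(1) sub x B0(3) by blast
  from V.independent_span_bound[OF fB0 ind this] have "finite (insert x B)" "card (insert x B) \<le> card B0" by auto
  moreover have "x \<notin> B" using xB V.span_base by blast
  ultimately have "card B + 1 \<le> card B0" by simp
  thus False using B(4) B0(4) d by simp
qed

definition FF :: "'v set set" where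
  "FF = {U. V.subspace U \<and> Kst U \<and> U \<subseteq> Vcomb \<and> (\<exists>y\<in>U. y \<in> Ecomb \<and> y \<noteq> 0)}"

lemma Vcomb_FF: "Vcomb \<in> FF"
  unfolding FF_def using Vcomb_sub Kst_Vcomb tv_Ecomb tv_nz Ecomb_Vcomb by blast

lemma main:
  "\<exists>j. j \<le> q - 1 \<and> w j \<in> invariants \<rho> (Iwahori1 val) \<and> irreducible_subrep sc \<rho> (KK val) (gen (w j))"
proof -
  define W where "W = insert einf (ev ` Fq)"
  have fW: "finite W" using finite_Fq W_def by simp
  obtain U0 where U0: "U0 \<in> FF" "\<And>U. U \<in> FF \<Longrightarrow> V.dim U0 \<le> V.dim U"
    using ex_has_least_nat[of "\<lambda>U. U \<in> FF" Vcomb V.dim] Vcomb_FF by blast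
  have U0p: "V.subspace U0" "Kst U0" "U0 \<subseteq> Vcomb" "\<exists>y\<in>U0. y \<in> Ecomb \<and> y \<noteq> 0" using U0(1) by (auto simp: FF_def)
  have U0W: "U0 \<subseteq> V.span W" using U0p(3) Vcomb_span W_def by blast
  have minU: "U = U0" if "U \<in> FF" "U \<subseteq> U0" for U
    using dim_eq[of U U0 W] that U0 U0p(1) U0W fW by (auto simp: FF_def)
  obtain y where y: "y \<in> U0" "y \<in> Ecomb" "y \<noteq> 0" using U0p(4) by blast
  obtain i where i: "i < q" "w i \<in> U0" "w i \<noteq> 0" using TP[OF U0p(2) U0p(1) y] by blast
  define j where "j = (LEAST i. i < q \<and> w i \<in> U0 \<and> w i \<noteq> 0)"
  have j: "j < q" "w j \<in> U0" "w j \<noteq> 0" using LeastI[of "\<lambda>i. i < q \<and> w i \<in> U0 \<and> w i \<noteq> 0" i] i j_def by auto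
  have jmin: "w k = 0" if "k < j" "w k \<in> U0" for k
    using not_less_Least[of k "\<lambda>i. i < q \<and> w i \<in> U0 \<and> w i \<noteq> 0"] that j(1) j_def by auto
  have tinv: "\<And>\<xi>. \<xi> \<in> Fq \<Longrightarrow> tau \<xi> (w j) = w j" using MI[OF U0p(2) U0p(1) j(1) j(2) jmin] by blast
  have inv: "w j \<in> invariants \<rho> (Iwahori1 val)" using w_I1[OF tinv] .
  have genFF: "gen x \<in> FF" if "x \<in> U0" "x \<in> Ecomb" "x \<noteq> 0" for x
    unfolding FF_def using gen_sub Kst_gen gen_min[OF U0p(2) U0p(1) that(1)] U0p(3) gen_self that by blast
  have gj: "gen (w j) = U0" using minU genFF[OF j(2) w_Ecomb j(3)] gen_min[OF U0p(2) U0p(1) j(2)] by blast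
  have g0: "U0 \<subseteq> gen (w 0)" if w0: "w 0 \<noteq> 0"
  proof -
    have "A (q - 1 + 0 - j) (w j) = sc (- (of_nat (j choose 0) * (- 1) ^ (j - 0))) (w 0)"
      by (rule A_iso) (use j(1) q_ge2 in auto)
    moreover have "A (q - 1 + 0 - j) (w j) \<in> U0" by (rule Kst_A[OF U0p(2) U0p(1) j(2)])
    ultimately have "sc (- (of_nat (j choose 0) * (- 1) ^ (j - 0))) (w 0) \<in> U0" by metis
    from scale_mem[OF U0p(1) this] have w0U: "w 0 \<in> U0" by simp
    have "gen (w 0) = U0" using minU genFF[OF w0U w_Ecomb w0] gen_min[OF U0p(2) U0p(1) w0U] by blast
    thus ?thesis by simp
  qed
  have irr: "irreducible_subrep sc \<rho> (KK val) (gen (w j))"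
    unfolding irreducible_subrep_def
  proof (intro conjI allI impI)
    show "gen (w j) \<noteq> {0}" using gen_self[of "w j"] j(3) by blast
  next
    fix U assume U: "V.subspace U \<and> U \<subseteq> gen (w j) \<and> (\<forall>g\<in>KK val. \<forall>u\<in>U. \<rho> g u \<in> U)"
    hence US: "V.subspace U" "U \<subseteq> U0" "Kst U" using gj by (auto simp: Kst_def)
    show "U = {0} \<or> U = gen (w j)"
    proof (cases "\<exists>y\<in>U. y \<in> Ecomb \<and> y \<noteq> 0")
      case True
      hence "U \<in> FF" using US U0p(3) unfolding FF_def by blast
      thus ?thesis using minU US gj by blast
    next
      case False
      show ?thesis
      proof (cases "U = {0}")
        case True thus ?thesis by simp
      next
        case nz: False
        then obtain u' where "u' \<in> U" "u' \<noteq> 0" using V.subspace_0[OF US(1)] by blast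
        moreover have "\<And>y. y \<in> U \<Longrightarrow> y \<in> Ecomb \<Longrightarrow> y = 0" using False by blast
        ultimately have False
          using line_false[OF US(3) US(1) _ _ _ _] US(2) U0p(3) g0 by blast
        thus ?thesis ..
      qed
    qed
  qed
  show ?thesis using j(1) inv irr by (intro exI[of _ j]) auto
qed

end

theorem lemma4p1:
  fixes val :: "'f::field \<Rightarrow> int"
    and unif_elt :: 'f
    and \<iota> :: "'f set \<Rightarrow> 'k::field"
    and sc :: "'k \<Rightarrow> 'v::ab_group_add \<Rightarrow> 'v"
    and \<rho> :: "'f^2^2 \<Rightarrow> 'v \<Rightarrow> 'v"
    and v :: 'v
    and chr :: "'f^2^2 \<Rightarrow> 'k"
  assumes F: "nonarch_local_field val"
    and unif: "unif_elt \<noteq> 0" "val unif_elt = 1"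
    and kclosed: "alg_closed TYPE('k)"
    and kalg: "algebraic_over_prime_field TYPE('k)"
    and emb: "residue_embedding val \<iota>"
    and rep: "smooth_rep val sc \<rho>"
    and v_inv: "v \<in> invariants \<rho> (Iwahori1 val)"
    and v_nz: "v \<noteq> 0"
    and chi_char: "\<forall>g\<in>Iwahori val. \<forall>h\<in>Iwahori val. chr (g ** h) = chr g * chr h"
    and chi_nz: "\<forall>g\<in>Iwahori val. chr g \<noteq> 0"
    and v_chi: "\<forall>g\<in>Iwahori val. \<rho> g v = sc (chr g) v"
  shows "\<exists>j::nat. j \<le> qq val - 1 \<and>
    (let w = (\<Sum>l\<in>residue_field val.
                sc (\<iota> l ^ j) (\<rho> (mat2 1 (teich val l) 0 1 ** mat2 unif_elt 0 0 1) v))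
     in w \<in> invariants \<rho> (Iwahori1 val) \<and>
        irreducible_subrep sc \<rho> (KK val) (gen_subrep sc \<rho> (KK val) w))"
proof -
  interpret RP val unif_elt \<iota> sc \<rho> v chr
    by (unfold_locales) (use F unif emb rep v_inv v_nz chi_char chi_nz v_chi in auto)
  obtain j where j: "j \<le> qq val - 1" "w j \<in> invariants \<rho> (Iwahori1 val)"
    "irreducible_subrep sc \<rho> (KK val) (gen (w j))" using main by blast
  have teq: "sc (\<iota> l ^ j) (\<rho> (mat2 1 (teich val l) 0 1 ** mat2 unif_elt 0 0 1) v) = sc (\<iota> l ^ j) (ev (\<iota> l))"
    if l: "l \<in> residue_field val" for l
  proof -
    have t: "teich val l \<in> Ov" "iota (teich val l) = \<iota> l" using teich_props[OF l] by auto
    have "\<rho> (mat2 1 (teich val l) 0 1 ** mat2 unif_elt 0 0 1) v = \<rho> (um (teich val l)) tv"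
      by (simp add: um_def[symmetric] tm_def[symmetric] rho_mult um_GL2 tm_GL2 tv_def)
    also have "\<dots> = ev (\<iota> l)" using um_tv[OF t(1)] t(2) by simp
    finally show ?thesis by simp
  qed
  have "(\<Sum>l\<in>residue_field val. sc (\<iota> l ^ j) (\<rho> (mat2 1 (teich val l) 0 1 ** mat2 unif_elt 0 0 1) v))
      = (\<Sum>l\<in>residue_field val. sc (\<iota> l ^ j) (ev (\<iota> l)))"
    by (rule sum.cong[OF refl]) (rule teq)
  also have "\<dots> = (\<Sum>z\<in>Fq. sc (z ^ j) (ev z))"
    unfolding Fq_def using sum.reindex[OF emb_inj, of "\<lambda>z. sc (z ^ j) (ev z)"] by simp
  also have "\<dots> = w j" by (simp add: w_def)
  finally have weq: "(\<Sum>l\<in>residue_field val. sc (\<iota> l ^ j) (\<rho> (mat2 1 (teich val l) 0 1 ** mat2 unif_elt 0 0 1) v)) = w j" .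
  have geq: "gen_subrep sc \<rho> (KK val) (w j) = gen (w j)" by (simp add: gen_subrep_def gen_def)
  show ?thesis using j weq geq by (intro exI[of _ j]) (simp add: Let_def)
qed


end
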